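(* For every integer $j\ge 0$: if $j$ is even then $\mathfrak{krv}^{(3,j)}=0$, and if $j$ is odd then $\mathfrak{krv}^{(3,j)}=\{u_\Gamma:\ \Gamma\in F(L)^{(3,j)}\}$.
   Context: Let $A=\mathbb{R}\langle x,y\rangle$ be the free associative algebra and $L\subset A$ the free Lie algebra on $x,y$ (smallest Lie subalgebra of $(A,[a,b]=ab-ba)$ containing $x,y$). Let $\operatorname{tr}=A/\operatorname{span}\{ab-ba\}$ with projection $a\mapsto\operatorname{tr}(a)$. Let $F(L)$ be the quotient of $L\otimes L$ by the span of $a\otimes b-b\otimes a$ and $a\otimes[b,c]-[a,b]\otimes c$, with projection $\Theta$, regarded as a subspace of $\operatorname{tr}$ via $\Theta(a\otimes b)\mapsto\operatorname{tr}(ab)$; $F(L)^{(i,j)}$ is the span of classes with exactly $i$ letters $x$ and $j$ letters $y$. For $x_0\in\{x,y\}$, $\partial_{x_0}:\operatorname{tr}\to A$ is $\operatorname{tr}(a_1\cdots a_n)\mapsto\sum_{i:\,a_i=x_0}a_{i+1}\cdots a_n a_1\cdots a_{i-1}$. For $\Gamma\in F(L)$, $u_\Gamma$ is the derivation of $L$ with $u_\Gamma(x)=\partial_y\Gamma$, $u_\Gamma(y)=-\partial_x\Gamma$. For $l\in A$ let $\partial^A_{x_0}(l)=\sum\partial^1\otimes\partial^2$ be the sum over occurrences of $x_0$ in monomials of (prefix)$\otimes$(suffix), and $\partial^L_{x_0}(l)=\sum\partial^1\epsilon(\partial^2)$ with $\epsilon$ the constant term. $\operatorname{div}(u)=\operatorname{tr}(\partial^L_x(u(x))+\partial^L_y(u(y)))$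 for $u\in\operatorname{Der}(L)$. $\mathfrak{krv}=\{u\in\operatorname{Der}(L):u([x,y])=0,\ \operatorname{div}(u)=0\}$, and $\mathfrak{krv}^{(i,j)}$ is the set of $u\in\mathfrak{krv}$ raising $x$-degree by $i-1$ and $y$-degree by $j-1$ (equivalently $u=u_\Gamma$ with $\Gamma\in F(L)^{(i,j)}$). *)

theory Defs
  imports Complex_Main "HOL-Library.Function_Algebras"
begin

datatype letter = X | Y

(* Elements of R<x,y> are represented by their coefficient functions on words.
   The algebra A itself is the set of finitely supported coefficient functions. *)
type_synonym ncs = "letter list \<Rightarrow> real"

definition polys :: "ncs set" where
  "polys = {a. finite {w. a w \<noteq> 0}}"

definition mono :: "letter list \<Rightarrow> ncs" where
  "mono w = (\<lambda>v. if v = w then 1 else 0)"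

definition gen :: "letter \<Rightarrow> ncs" where
  "gen c = mono [c]"

definition smul :: "real \<Rightarrow> ncs \<Rightarrow> ncs" where
  "smul c a = (\<lambda>w. c * a w)"

definition nmul :: "ncs \<Rightarrow> ncs \<Rightarrow> ncs" where
  "nmul a b = (\<lambda>w. \<Sum>k\<le>length w. a (take k w) * b (drop k w))"

definition bracket :: "ncs \<Rightarrow> ncs \<Rightarrow> ncs" where
  "bracket a b = nmul a b - nmul b a"

inductive_set lspan :: "ncs set \<Rightarrow> ncs set" for S where
  lspan_zero: "0 \<in> lspan S"
| lspan_base: "a \<in> S \<Longrightarrow> a \<in> lspan S"
| lspan_add: "a \<in> lspan S \<Longrightarrow> b \<in> lspan S \<Longrightarrow> a + b \<in> lspan S"
| lspan_smul: "a \<in> lspan S \<Longrightarrow> smul c a \<in> lspan S"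

(* the free Lie algebra L: smallest Lie subalgebra of (A,[,]) containing x, y *)
inductive_set freeLie :: "ncs set" where
  fl_gen: "gen c \<in> freeLie"
| fl_zero: "0 \<in> freeLie"
| fl_add: "a \<in> freeLie \<Longrightarrow> b \<in> freeLie \<Longrightarrow> a + b \<in> freeLie"
| fl_smul: "a \<in> freeLie \<Longrightarrow> smul c a \<in> freeLie"
| fl_bracket: "a \<in> freeLie \<Longrightarrow> b \<in> freeLie \<Longrightarrow> bracket a b \<in> freeLie"

(* homogeneity of bidegree (p, q) = (#x, #y); degrees are integers so that
   a negative degree forces the element to vanish *)
definition homog :: "int \<Rightarrow> int \<Rightarrow> ncs \<Rightarrow> bool" where
  "homog p q a \<longleftrightarrow> (\<forall>w. a w \<noteq> 0 \<longrightarrow>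
      int (count_list w X) = p \<and> int (count_list w Y) = q)"

(* tr(a) = 0 in tr = A / span{ab - ba} *)
definition trzero :: "ncs \<Rightarrow> bool" where
  "trzero a \<longleftrightarrow> a \<in> lspan {nmul p q - nmul q p | p q. p \<in> polys \<and> q \<in> polys}"

(* cyclic derivative \<partial>_{x0} applied to tr(g), computed on a representative g \<in> A:
   tr(a_1...a_n) \<mapsto> sum over i with a_i = x0 of a_{i+1}...a_n a_1...a_{i-1} *)
definition dcyc :: "letter \<Rightarrow> ncs \<Rightarrow> ncs" where
  "dcyc x0 g = (\<lambda>v. \<Sum>k\<le>length v. g (drop k v @ x0 # take k v))"

(* \<partial>^A_{x0}(l) \<in> A \<otimes> A, as a coefficient function on pairs (prefix, suffix) *)
definition dA :: "letter \<Rightarrow> ncs \<Rightarrow> (letter list \<times> letter list \<Rightarrow> real)" where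
  "dA x0 l = (\<lambda>(p, s). l (p @ x0 # s))"

(* \<partial>^L_{x0}(l) = (id \<otimes> \<epsilon>)(\<partial>^A_{x0} l) *)
definition dL :: "letter \<Rightarrow> ncs \<Rightarrow> ncs" where
  "dL x0 l = (\<lambda>p. \<Sum>s\<in>{[]}. dA x0 l (p, s))"

(* Derivations of L, represented as maps A \<rightarrow> A vanishing outside L *)
definition DerL :: "(ncs \<Rightarrow> ncs) set" where
  "DerL = {D. (\<forall>l. l \<notin> freeLie \<longrightarrow> D l = 0)
            \<and> (\<forall>l\<in>freeLie. D l \<in> freeLie)
            \<and> (\<forall>a\<in>freeLie. \<forall>b\<in>freeLie. D (a + b) = D a + D b)
            \<and> (\<forall>c. \<forall>a\<in>freeLie. D (smul c a) = smul c (D a))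
            \<and> (\<forall>a\<in>freeLie. \<forall>b\<in>freeLie.
                 D (bracket a b) = bracket (D a) b + bracket a (D b))}"

definition divg :: "(ncs \<Rightarrow> ncs) \<Rightarrow> ncs" where
  "divg u = dL X (u (gen X)) + dL Y (u (gen Y))"

definition krv :: "nat \<Rightarrow> nat \<Rightarrow> (ncs \<Rightarrow> ncs) set" where
  "krv i j = {u \<in> DerL. u (bracket (gen X) (gen Y)) = 0 \<and> trzero (divg u)
      \<and> (\<forall>l\<in>freeLie. \<forall>p q. homog p q l \<longrightarrow>
             homog (p + int i - 1) (q + int j - 1) (u l))}"

(* the associative derivation of A sending x \<mapsto> a, y \<mapsto> b *)
definition derA :: "ncs \<Rightarrow> ncs \<Rightarrow> ncs \<Rightarrow> ncs" where
  "derA a b g = (\<lambda>v. \<Sum>w\<in>{w. g w \<noteq> 0}. g w *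
      (\<Sum>i<length w. nmul (nmul (mono (take i w)) (if w ! i = X then a else b))
                           (mono (drop (Suc i) w)) v))"

(* u_\<Gamma> for \<Gamma> = tr(g): the derivation of L with x \<mapsto> \<partial>_y \<Gamma>, y \<mapsto> -\<partial>_x \<Gamma> *)
definition uGamma :: "ncs \<Rightarrow> (ncs \<Rightarrow> ncs)" where
  "uGamma g = (\<lambda>l. if l \<in> freeLie then derA (dcyc Y g) (- dcyc X g) l else 0)"

(* representatives in A of F(L)^{(i,j)} \<subseteq> tr: span of a b with a, b \<in> L homogeneous,
   total bidegree (i, j); F(L)^{(i,j)} is the image of this set under tr *)
definition FLrep :: "nat \<Rightarrow> nat \<Rightarrow> ncs set" where
  "FLrep i j = lspan {nmul a b | a b i1 j1 i2 j2. a \<in> freeLie \<and> b \<in> freeLie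
      \<and> homog i1 j1 a \<and> homog i2 j2 b \<and> i1 + i2 = int i \<and> j1 + j2 = int j}"

end

theory Submission
  imports Defs
begin

definition supp :: "ncs \<Rightarrow> letter list set" where "supp a = {w. a w \<noteq> 0}"

lemma polys_iff: "a \<in> polys \<longleftrightarrow> finite (supp a)" by (simp add: polys_def supp_def)

definition opx :: "(letter list \<Rightarrow> ncs) \<Rightarrow> ncs \<Rightarrow> ncs" where
  "opx f g = (\<lambda>v. \<Sum>w\<in>supp g. g w * f w v)"

lemma opx_superset: "finite S \<Longrightarrow> supp g \<subseteq> S \<Longrightarrow> opx f g = (\<lambda>v. \<Sum>w\<in>S. g w * f w v)"
  unfolding opx_def by (intro ext sum.mono_neutral_left) (auto simp: supp_def)

lemma comb_supp: "supp (\<lambda>v. \<Sum>i\<in>I. c i * mono (u i) v) \<subseteq> u ` I"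
proof
  fix w assume "w \<in> supp (\<lambda>v. \<Sum>i\<in>I. c i * mono (u i) v)"
  then have "(\<Sum>i\<in>I. c i * mono (u i) w) \<noteq> 0" by (simp add: supp_def)
  then obtain i where "i \<in> I" "c i * mono (u i) w \<noteq> 0" by (meson sum.neutral)
  then show "w \<in> u ` I" by (auto simp: mono_def split: if_splits)
qed

lemma opx_comb: assumes "finite I"
  shows "opx f (\<lambda>v. \<Sum>i\<in>I. c i * mono (u i) v) = (\<lambda>v. \<Sum>i\<in>I. c i * f (u i) v)"
proof
  fix v
  have "opx f (\<lambda>v. \<Sum>i\<in>I. c i * mono (u i) v) v = (\<Sum>w\<in>u ` I. (\<Sum>i\<in>I. c i * mono (u i) w) * f w v)"
    using opx_superset[OF finite_imageI[OF assms] comb_supp] by simp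
  also have "\<dots> = (\<Sum>w\<in>u ` I. (\<Sum>i\<in>{i\<in>I. u i = w}. c i * f (u i) v))"
  proof (intro sum.cong refl)
    fix w assume "w \<in> u ` I"
    have "(\<Sum>i\<in>I. c i * mono (u i) w) * f w v = (\<Sum>i\<in>I. if u i = w then c i * f w v else 0)"
      by (auto simp: sum_distrib_right mono_def intro!: sum.cong)
    also have "\<dots> = (\<Sum>i\<in>{i\<in>I. u i = w}. c i * f w v)"
      using assms by (simp add: sum.inter_filter)
    also have "\<dots> = (\<Sum>i\<in>{i\<in>I. u i = w}. c i * f (u i) v)"
      by (rule sum.cong) auto
    finally show "(\<Sum>i\<in>I. c i * mono (u i) w) * f w v = (\<Sum>i\<in>{i\<in>I. u i = w}. c i * f (u i) v)" .
  qed
  also have "\<dots> = (\<Sum>i\<in>I. c i * f (u i) v)"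
    using sum.image_gen[OF assms, of "\<lambda>i. c i * f (u i) v" u] by simp
  finally show "opx f (\<lambda>v. \<Sum>i\<in>I. c i * mono (u i) v) v = (\<Sum>i\<in>I. c i * f (u i) v)" .
qed

lemma poly_repr: assumes "a \<in> polys" shows "a = (\<lambda>v. \<Sum>w\<in>supp a. a w * mono w v)"
proof
  fix v
  have "(\<Sum>w\<in>supp a. a w * mono w v) = (\<Sum>w\<in>supp a. if w = v then a v else 0)"
    by (intro sum.cong) (auto simp: mono_def)
  also have "\<dots> = a v" using assms by (simp add: polys_iff supp_def)
  finally show "a v = (\<Sum>w\<in>supp a. a w * mono w v)" by simp
qed

lemma supp_add: "supp (a + b) \<subseteq> supp a \<union> supp b" by (auto simp: supp_def)
lemma supp_diff: "supp (a - b) \<subseteq> supp a \<union> supp b" by (auto simp: supp_def)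
lemma supp_smul: "supp (smul c a) \<subseteq> supp a" by (auto simp: supp_def smul_def)
lemma supp_uminus: "supp (- a) = supp a" by (auto simp: supp_def)

lemma polys_add: "a \<in> polys \<Longrightarrow> b \<in> polys \<Longrightarrow> a + b \<in> polys"
  by (meson finite_UnI polys_iff rev_finite_subset supp_add)
lemma polys_diff: "a \<in> polys \<Longrightarrow> b \<in> polys \<Longrightarrow> a - b \<in> polys"
  by (meson finite_UnI polys_iff rev_finite_subset supp_diff)
lemma polys_smul: "a \<in> polys \<Longrightarrow> smul c a \<in> polys"
  by (meson polys_iff rev_finite_subset supp_smul)
lemma polys_uminus: "a \<in> polys \<Longrightarrow> - a \<in> polys"
  by (simp add: polys_iff supp_uminus)
lemma polys_zero: "0 \<in> polys" by (simp add: polys_def)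
lemma supp_mono: "supp (mono u) = {u}" by (auto simp: supp_def mono_def)
lemma polys_mono: "mono u \<in> polys" by (simp add: polys_iff supp_mono)
lemma polys_gen: "gen c \<in> polys" by (simp add: gen_def polys_mono)

lemma opx_add: "a \<in> polys \<Longrightarrow> b \<in> polys \<Longrightarrow> opx f (a + b) = opx f a + opx f b"
proof -
  assume a: "a \<in> polys" and b: "b \<in> polys"
  let ?S = "supp a \<union> supp b"
  have fin: "finite ?S" using a b by (simp add: polys_iff)
  have "opx f (a + b) = (\<lambda>v. \<Sum>w\<in>?S. (a + b) w * f w v)" by (rule opx_superset[OF fin supp_add])
  moreover have "opx f a = (\<lambda>v. \<Sum>w\<in>?S. a w * f w v)" by (rule opx_superset[OF fin]) auto
  moreover have "opx f b = (\<lambda>v. \<Sum>w\<in>?S. b w * f w v)" by (rule opx_superset[OF fin]) auto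
  ultimately show ?thesis by (auto simp: distrib_right sum.distrib)
qed

lemma opx_smul: "a \<in> polys \<Longrightarrow> opx f (smul c a) = smul c (opx f a)"
proof -
  assume a: "a \<in> polys"
  have fin: "finite (supp a)" using a by (simp add: polys_iff)
  have "opx f (smul c a) = (\<lambda>v. \<Sum>w\<in>supp a. smul c a w * f w v)" by (rule opx_superset[OF fin supp_smul])
  then show ?thesis by (simp add: opx_def smul_def sum_distrib_left mult.assoc)
qed

lemma opx_zero: "opx f 0 = 0" by (simp add: opx_def supp_def fun_eq_iff)

lemma opx_uminus: "a \<in> polys \<Longrightarrow> opx f (- a) = - opx f a"
  by (simp add: opx_def supp_uminus fun_eq_iff sum_negf)

lemma opx_diff: "a \<in> polys \<Longrightarrow> b \<in> polys \<Longrightarrow> opx f (a - b) = opx f a - opx f b"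
  using opx_add[of a "- b" f] opx_uminus[of b f] by (simp add: polys_uminus)

lemma opx_mono: "opx f (mono u) = f u"
  unfolding opx_def supp_mono by (simp add: mono_def)

lemma nmul_sum_left: "nmul (\<lambda>v. \<Sum>i\<in>I. A i v) B = (\<lambda>v. \<Sum>i\<in>I. nmul (A i) B v)"
  unfolding nmul_def by (auto simp: sum_distrib_right intro!: ext sum.swap[THEN trans])
lemma nmul_sum_right: "nmul B (\<lambda>v. \<Sum>i\<in>I. A i v) = (\<lambda>v. \<Sum>i\<in>I. nmul B (A i) v)"
  unfolding nmul_def by (auto simp: sum_distrib_left intro!: ext sum.swap[THEN trans])
lemma nmul_cmult_left: "nmul (\<lambda>v. c * A v) B = (\<lambda>v. c * nmul A B v)"
  unfolding nmul_def by (auto simp: sum_distrib_left mult.assoc)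
lemma nmul_cmult_right: "nmul B (\<lambda>v. c * A v) = (\<lambda>v. c * nmul B A v)"
  unfolding nmul_def by (auto simp: sum_distrib_left mult.left_commute)
lemma nmul_add_left: "nmul (a + b) c = nmul a c + nmul b c"
  unfolding nmul_def by (auto simp: distrib_right sum.distrib)
lemma nmul_add_right: "nmul c (a + b) = nmul c a + nmul c b"
  unfolding nmul_def by (auto simp: distrib_left sum.distrib)
lemma nmul_uminus_left: "nmul (- a) c = - nmul a c"
  unfolding nmul_def by (auto simp: sum_negf)
lemma nmul_uminus_right: "nmul c (- a) = - nmul c a"
  unfolding nmul_def by (auto simp: sum_negf)
lemma nmul_diff_left: "nmul (a - b) c = nmul a c - nmul b c"
  using nmul_add_left[of a "- b" c] nmul_uminus_left[of b c] by simp
lemma nmul_diff_right: "nmul c (a - b) = nmul c a - nmul c b"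
  using nmul_add_right[of c a "- b"] nmul_uminus_right[of c b] by simp
lemma nmul_smul_left: "nmul (smul k a) c = smul k (nmul a c)"
  unfolding nmul_def smul_def by (auto simp: sum_distrib_left mult.assoc)
lemma nmul_smul_right: "nmul c (smul k a) = smul k (nmul c a)"
  unfolding nmul_def smul_def by (auto simp: sum_distrib_left mult.left_commute)
lemma nmul_zero_left[simp]: "nmul 0 c = 0" unfolding nmul_def by (auto simp: fun_eq_iff)
lemma nmul_zero_right[simp]: "nmul c 0 = 0" unfolding nmul_def by (auto simp: fun_eq_iff)

lemma nmul_mono_left: "nmul (mono u) a v = (if take (length u) v = u then a (drop (length u) v) else 0)"
proof -
  have "nmul (mono u) a v = (\<Sum>k\<le>length v. if k = length u \<and> take (length u) v = u then a (drop (length u) v) else 0)"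
    unfolding nmul_def mono_def by (intro sum.cong refl) auto
  also have "\<dots> = (if take (length u) v = u then a (drop (length u) v) else 0)"
  proof (cases "take (length u) v = u")
    case True
    have "min (length u) (length v) = length u" using arg_cong[OF True, of length] by simp
    then have "length u \<le> length v" by linarith
    then show ?thesis using True by (simp add: sum.delta)
  qed simp
  finally show ?thesis .
qed

lemma nmul_mono_right: "nmul a (mono u) v = (if length u \<le> length v \<and> drop (length v - length u) v = u then a (take (length v - length u) v) else 0)"
proof -
  have "nmul a (mono u) v = (\<Sum>k\<le>length v. if k = length v - length u \<and> length u \<le> length v \<and> drop (length v - length u) v = u then a (take (length v - length u) v) else 0)"
    unfolding nmul_def mono_def by (intro sum.cong refl) auto
  also have "\<dots> = (if length u \<le> length v \<and> drop (length v - length u) v = u then a (take (length v - length u) v) else 0)"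
    by (cases "length u \<le> length v \<and> drop (length v - length u) v = u") (auto simp: sum.delta intro!: sum.neutral)
  finally show ?thesis .
qed

lemma nmul_mono_mono: "nmul (mono u) (mono w) = mono (u @ w)"
  unfolding fun_eq_iff nmul_mono_left by (auto simp: mono_def) (metis append_take_drop_id)

lemma nmul_one_left[simp]: "nmul (mono []) a = a"
  by (simp add: fun_eq_iff nmul_mono_left)
lemma nmul_one_right[simp]: "nmul a (mono []) = a"
  by (simp add: fun_eq_iff nmul_mono_right)

lemma nmul_assoc: "nmul (nmul a b) c = nmul a (nmul b c)"
proof
  fix v :: "letter list"
  let ?n = "length v"
  let ?G = "\<lambda>l m. a (take l v) * b (take m (drop l v)) * c (drop m (drop l v))"
  have "nmul (nmul a b) c v = (\<Sum>k\<le>?n. \<Sum>l\<le>k. ?G l (k - l))"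
    unfolding nmul_def
  proof (intro sum.cong refl)
    fix k assume k: "k \<in> {..?n}"
    then have lk: "length (take k v) = k" by simp
    have "(\<Sum>l\<le>length (take k v). a (take l (take k v)) * b (drop l (take k v))) * c (drop k v)
        = (\<Sum>l\<le>k. a (take l (take k v)) * b (drop l (take k v)) * c (drop k v))"
      by (simp only: lk sum_distrib_right)
    also have "\<dots> = (\<Sum>l\<le>k. ?G l (k - l))"
    proof (intro sum.cong refl)
      fix l assume "l \<in> {..k}"
      then have "l \<le> k" by simp
      then have "take l (take k v) = take l v" "drop l (take k v) = take (k - l) (drop l v)"
        "drop k v = drop (k - l) (drop l v)"
        by (simp_all add: min_def drop_take)
      then show "a (take l (take k v)) * b (drop l (take k v)) * c (drop k v) = ?G l (k - l)" by simp
    qed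
    finally show "(\<Sum>l\<le>length (take k v). a (take l (take k v)) * b (drop l (take k v))) * c (drop k v)
        = (\<Sum>l\<le>k. ?G l (k - l))" .
  qed
  also have "\<dots> = (\<Sum>(l,m)\<in>{(l,m). l + m \<le> ?n}. ?G l m)"
    by (rule sum.triangle_reindex_eq[symmetric])
  also have "\<dots> = (\<Sum>l\<le>?n. \<Sum>m\<le>?n - l. ?G l m)"
  proof -
    have "{(l,m). l + m \<le> ?n} = Sigma {..?n} (\<lambda>l. {..?n - l})" by auto
    then show ?thesis by (subst sum.Sigma) auto
  qed
  also have "\<dots> = nmul a (nmul b c) v"
    unfolding nmul_def by (simp add: sum_distrib_left mult.assoc del: drop_drop)
  finally show "nmul (nmul a b) c v = nmul a (nmul b c) v" .
qed

lemma nmul_expand: assumes "p \<in> polys" "q \<in> polys"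
  shows "nmul p q = (\<lambda>v. \<Sum>x\<in>supp p. \<Sum>y\<in>supp q. p x * q y * mono (x @ y) v)"
proof -
  have "nmul p q = nmul (\<lambda>v. \<Sum>x\<in>supp p. p x * mono x v) (\<lambda>v. \<Sum>y\<in>supp q. q y * mono y v)"
    using poly_repr[OF assms(1)] poly_repr[OF assms(2)] by simp
  also have "\<dots> = (\<lambda>v. \<Sum>x\<in>supp p. nmul (\<lambda>v. p x * mono x v) (\<lambda>v. \<Sum>y\<in>supp q. q y * mono y v) v)"
    by (rule nmul_sum_left)
  also have "\<dots> = (\<lambda>v. \<Sum>x\<in>supp p. p x * nmul (mono x) (\<lambda>v. \<Sum>y\<in>supp q. q y * mono y v) v)"
    by (simp only: nmul_cmult_left)
  also have "\<dots> = (\<lambda>v. \<Sum>x\<in>supp p. p x * (\<Sum>y\<in>supp q. nmul (mono x) (\<lambda>v. q y * mono y v) v))"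
    by (simp only: nmul_sum_right)
  also have "\<dots> = (\<lambda>v. \<Sum>x\<in>supp p. p x * (\<Sum>y\<in>supp q. q y * mono (x @ y) v))"
    by (simp only: nmul_cmult_right nmul_mono_mono)
  also have "\<dots> = (\<lambda>v. \<Sum>x\<in>supp p. \<Sum>y\<in>supp q. p x * q y * mono (x @ y) v)"
    by (simp add: sum_distrib_left mult.assoc)
  finally show ?thesis .
qed


lemma lam0[simp]: "(\<lambda>a::letter list. 0::real) = 0" by (simp add: fun_eq_iff)
lemma lamplus[simp]: "(\<lambda>c::letter list. (a::ncs) c + b c) = a + b" by (simp add: fun_eq_iff)

lemma nmul_expand_prod: assumes "p \<in> polys" "q \<in> polys"
  shows "nmul p q = (\<lambda>v. \<Sum>xy\<in>supp p \<times> supp q. (p (fst xy) * q (snd xy)) * mono (fst xy @ snd xy) v)"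
  using nmul_expand[OF assms] by (simp add: sum.cartesian_product case_prod_beta)

lemma polys_nmul: assumes "p \<in> polys" "q \<in> polys" shows "nmul p q \<in> polys"
proof -
  have fin: "finite (supp p \<times> supp q)" using assms by (simp add: polys_iff)
  show ?thesis unfolding polys_iff nmul_expand_prod[OF assms]
    by (rule finite_subset[OF comb_supp finite_imageI[OF fin]])
qed

lemma polys_bracket: "p \<in> polys \<Longrightarrow> q \<in> polys \<Longrightarrow> bracket p q \<in> polys"
  by (simp add: bracket_def polys_diff polys_nmul)

lemma freeLie_polys: "l \<in> freeLie \<Longrightarrow> l \<in> polys"
  by (induction rule: freeLie.induct)
     (auto simp: polys_gen polys_zero polys_add polys_smul polys_bracket)

lemma opx_nmul: assumes "p \<in> polys" "q \<in> polys"
  shows "opx f (nmul p q) = (\<lambda>v. \<Sum>x\<in>supp p. \<Sum>y\<in>supp q. p x * q y * f (x @ y) v)"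
proof -
  have fin: "finite (supp p \<times> supp q)" using assms by (simp add: polys_iff)
  show ?thesis unfolding nmul_expand_prod[OF assms] opx_comb[OF fin]
    by (simp add: sum.cartesian_product case_prod_beta)
qed

lemma nmul_opx_left: assumes "q \<in> polys"
  shows "nmul (opx f p) q = (\<lambda>v. \<Sum>x\<in>supp p. \<Sum>y\<in>supp q. p x * q y * nmul (f x) (mono y) v)"
proof -
  have "nmul (opx f p) q = nmul (\<lambda>v. \<Sum>x\<in>supp p. p x * f x v) (\<lambda>v. \<Sum>y\<in>supp q. q y * mono y v)"
    using poly_repr[OF assms] by (simp add: opx_def)
  also have "\<dots> = (\<lambda>v. \<Sum>x\<in>supp p. \<Sum>y\<in>supp q. p x * q y * nmul (f x) (mono y) v)"
    by (simp only: nmul_sum_left nmul_cmult_left nmul_sum_right nmul_cmult_right sum_distrib_left mult.assoc)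
  finally show ?thesis .
qed

lemma nmul_opx_right: assumes "p \<in> polys"
  shows "nmul p (opx f q) = (\<lambda>v. \<Sum>x\<in>supp p. \<Sum>y\<in>supp q. p x * q y * nmul (mono x) (f y) v)"
proof -
  have "nmul p (opx f q) = nmul (\<lambda>v. \<Sum>x\<in>supp p. p x * mono x v) (\<lambda>v. \<Sum>y\<in>supp q. q y * f y v)"
    using poly_repr[OF assms] by (simp add: opx_def)
  also have "\<dots> = (\<lambda>v. \<Sum>x\<in>supp p. \<Sum>y\<in>supp q. p x * q y * nmul (mono x) (f y) v)"
    by (simp only: nmul_sum_left nmul_cmult_left nmul_sum_right nmul_cmult_right sum_distrib_left mult.assoc)
  finally show ?thesis .
qed

lemma sum_lessThan_add: "(\<Sum>i<m + n. f i) = (\<Sum>i<m. f i) + (\<Sum>i<n. f (m + i))"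
  for f :: "nat \<Rightarrow> 'a::comm_monoid_add"
  by (induction n) (simp_all add: add.assoc)

definition Dw :: "ncs \<Rightarrow> ncs \<Rightarrow> letter list \<Rightarrow> ncs" where
  "Dw a b w = (\<lambda>v. \<Sum>i<length w. nmul (nmul (mono (take i w)) (if w ! i = X then a else b)) (mono (drop (Suc i) w)) v)"

lemma derA_opx: "derA a b g = opx (Dw a b) g"
  by (simp add: derA_def opx_def supp_def Dw_def)

lemma Dw_append: "Dw a b (x @ y) = nmul (Dw a b x) (mono y) + nmul (mono x) (Dw a b y)"
proof
  fix v
  let ?K = "\<lambda>w i. (if w ! i = X then a else b)"
  have "Dw a b (x @ y) v = (\<Sum>i<length x. nmul (nmul (mono (take i (x@y))) (?K (x@y) i)) (mono (drop (Suc i) (x@y))) v)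
     + (\<Sum>i<length y. nmul (nmul (mono (take (length x + i) (x@y))) (?K (x@y) (length x + i))) (mono (drop (Suc (length x + i)) (x@y))) v)"
    unfolding Dw_def by (simp add: sum_lessThan_add)
  also have "(\<Sum>i<length x. nmul (nmul (mono (take i (x@y))) (?K (x@y) i)) (mono (drop (Suc i) (x@y))) v)
      = (\<Sum>i<length x. nmul (nmul (nmul (mono (take i x)) (?K x i)) (mono (drop (Suc i) x))) (mono y) v)"
    by (intro sum.cong refl) (simp add: nth_append nmul_mono_mono[symmetric] nmul_assoc)
  also have "\<dots> = nmul (Dw a b x) (mono y) v"
    unfolding Dw_def by (simp only: nmul_sum_left)
  also have "(\<Sum>i<length y. nmul (nmul (mono (take (length x + i) (x@y))) (?K (x@y) (length x + i))) (mono (drop (Suc (length x + i)) (x@y))) v)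
      = (\<Sum>i<length y. nmul (mono x) (nmul (nmul (mono (take i y)) (?K y i)) (mono (drop (Suc i) y))) v)"
    by (intro sum.cong refl) (simp add: nth_append nmul_mono_mono[symmetric] nmul_assoc)
  also have "\<dots> = nmul (mono x) (Dw a b y) v"
    unfolding Dw_def by (simp only: nmul_sum_right)
  finally show "Dw a b (x @ y) v = (nmul (Dw a b x) (mono y) + nmul (mono x) (Dw a b y)) v" by simp
qed

lemma derA_nmul: assumes "p \<in> polys" "q \<in> polys"
  shows "derA a b (nmul p q) = nmul (derA a b p) q + nmul p (derA a b q)"
  unfolding derA_opx opx_nmul[OF assms] nmul_opx_left[OF assms(2)] nmul_opx_right[OF assms(1)] Dw_append
  by (simp add: fun_eq_iff distrib_left sum.distrib)

lemma derA_add: "p \<in> polys \<Longrightarrow> q \<in> polys \<Longrightarrow> derA a b (p + q) = derA a b p + derA a b q"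
  by (simp add: derA_opx opx_add)
lemma derA_diff: "p \<in> polys \<Longrightarrow> q \<in> polys \<Longrightarrow> derA a b (p - q) = derA a b p - derA a b q"
  by (simp add: derA_opx opx_diff)
lemma derA_smul: "p \<in> polys \<Longrightarrow> derA a b (smul c p) = smul c (derA a b p)"
  by (simp add: derA_opx opx_smul)
lemma derA_zero: "derA a b 0 = 0"
  by (simp add: derA_opx opx_zero)

lemma derA_bracket: assumes "p \<in> polys" "q \<in> polys"
  shows "derA a b (bracket p q) = bracket (derA a b p) q + bracket p (derA a b q)"
  using assms
  by (simp add: bracket_def derA_diff polys_nmul derA_nmul nmul_diff_left nmul_diff_right)

lemma derA_gen: "derA a b (gen X) = a" "derA a b (gen Y) = b"
  by (simp_all add: derA_opx gen_def opx_mono Dw_def)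

lemma smul_m1: "smul (-1) a = - a" by (simp add: smul_def fun_eq_iff)
lemma freeLie_diff: "a \<in> freeLie \<Longrightarrow> b \<in> freeLie \<Longrightarrow> a - b \<in> freeLie"
  using fl_add[OF _ fl_smul[of b "-1"]] by (simp add: smul_m1)
lemma freeLie_uminus: "a \<in> freeLie \<Longrightarrow> - a \<in> freeLie"
  using fl_smul[of a "-1"] by (simp add: smul_m1)

lemma derA_Lie: assumes "a \<in> freeLie" "b \<in> freeLie" "l \<in> freeLie"
  shows "derA a b l \<in> freeLie"
  using assms(3)
proof (induction rule: freeLie.induct)
  case (fl_gen c) then show ?case using assms by (cases c) (simp_all add: derA_gen)
next
  case fl_zero then show ?case by (simp add: derA_zero freeLie.fl_zero)
next
  case (fl_add a' b') then show ?case by (simp add: derA_add freeLie_polys freeLie.fl_add)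
next
  case (fl_smul a' c) then show ?case by (simp add: derA_smul freeLie_polys freeLie.fl_smul)
next
  case (fl_bracket a' b') then show ?case
    by (simp add: derA_bracket freeLie_polys freeLie.fl_add freeLie.fl_bracket)
qed

definition Rw :: "letter \<Rightarrow> ncs \<Rightarrow> letter list \<Rightarrow> ncs" where
  "Rw c M w = (\<lambda>v. \<Sum>i<length w. if w ! i = c then nmul (nmul (mono (drop (Suc i) w)) M) (mono (take i w)) v else 0)"

definition Rop :: "letter \<Rightarrow> ncs \<Rightarrow> ncs \<Rightarrow> ncs" where
  "Rop c M g = opx (Rw c M) g"

lemma Rw_append: "Rw c M (x @ y) = Rw c (nmul (mono y) M) x + Rw c (nmul M (mono x)) y"
proof
  fix v
  let ?T = "\<lambda>w M i. if w ! i = c then nmul (nmul (mono (drop (Suc i) w)) M) (mono (take i w)) v else 0"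
  have "Rw c M (x @ y) v = (\<Sum>i<length x. ?T (x@y) M i) + (\<Sum>i<length y. ?T (x@y) M (length x + i))"
    unfolding Rw_def by (simp add: sum_lessThan_add)
  also have "(\<Sum>i<length x. ?T (x@y) M i) = (\<Sum>i<length x. ?T x (nmul (mono y) M) i)"
    by (intro sum.cong refl) (simp add: nth_append nmul_mono_mono[symmetric] nmul_assoc)
  also have "(\<Sum>i<length y. ?T (x@y) M (length x + i)) = (\<Sum>i<length y. ?T y (nmul M (mono x)) i)"
    by (intro sum.cong refl) (simp add: nth_append nmul_mono_mono[symmetric] nmul_assoc)
  finally show "Rw c M (x @ y) v = (Rw c (nmul (mono y) M) x + Rw c (nmul M (mono x)) y) v"
    by (simp add: Rw_def)
qed

lemma if_sum_distrib: "(if P then sum f I else 0) = sum (\<lambda>i. if P then f i else 0) I"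
  by simp

lemma Rw_sum: "Rw c (\<lambda>v. \<Sum>i\<in>I. k i * A i v) w = (\<lambda>v. \<Sum>i\<in>I. k i * Rw c (A i) w v)"
proof
  fix v
  have "Rw c (\<lambda>v. \<Sum>i\<in>I. k i * A i v) w v = (\<Sum>j<length w. \<Sum>i\<in>I.
      if w ! j = c then k i * nmul (nmul (mono (drop (Suc j) w)) (A i)) (mono (take j w)) v else 0)"
    unfolding Rw_def
    by (simp only: nmul_sum_left nmul_sum_right nmul_cmult_left nmul_cmult_right if_sum_distrib)
  also have "\<dots> = (\<Sum>i\<in>I. \<Sum>j<length w.
      if w ! j = c then k i * nmul (nmul (mono (drop (Suc j) w)) (A i)) (mono (take j w)) v else 0)"
    by (rule sum.swap)
  also have "\<dots> = (\<Sum>i\<in>I. k i * Rw c (A i) w v)"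
    unfolding Rw_def by (simp add: sum_distrib_left if_distrib[of "\<lambda>z. k _ * z"] cong: if_cong)
  finally show "Rw c (\<lambda>v. \<Sum>i\<in>I. k i * A i v) w v = (\<Sum>i\<in>I. k i * Rw c (A i) w v)" .
qed

lemma Rw_diff: "Rw c (M1 - M2) w = Rw c M1 w - Rw c M2 w"
  unfolding Rw_def
  by (simp add: fun_eq_iff nmul_diff_left nmul_diff_right sum_subtractf[symmetric] if_distrib cong: if_cong)

lemma Rop_diff_M: "Rop c (M1 - M2) g = Rop c M1 g - Rop c M2 g"
  unfolding Rop_def opx_def Rw_diff by (simp add: fun_eq_iff right_diff_distrib sum_subtractf)

lemma Rop_nmul: assumes "p \<in> polys" "q \<in> polys"
  shows "Rop c M (nmul p q) = Rop c (nmul q M) p + Rop c (nmul M p) q"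
proof -
  have q: "nmul q M = (\<lambda>v. \<Sum>y\<in>supp q. q y * nmul (mono y) M v)"
    by (subst poly_repr[OF assms(2)]) (simp only: nmul_sum_left nmul_cmult_left)
  have p: "nmul M p = (\<lambda>v. \<Sum>x\<in>supp p. p x * nmul M (mono x) v)"
    by (subst poly_repr[OF assms(1)]) (simp only: nmul_sum_right nmul_cmult_right)
  show ?thesis
    unfolding Rop_def opx_nmul[OF assms] Rw_append q p Rw_sum
    by (simp add: fun_eq_iff opx_def distrib_left sum.distrib sum_distrib_left mult.assoc mult.left_commute
        sum.swap[of _ "supp q"])
qed


lemma lamminus[simp]: "(\<lambda>c::letter list. (a::ncs) c - b c) = a - b" by (simp add: fun_eq_iff)
lemma lamuminus[simp]: "(\<lambda>c::letter list. - (a::ncs) c) = - a" by (simp add: fun_eq_iff)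

lemma smul_zero: "smul k 0 = 0" by (simp add: smul_def fun_eq_iff)

lemma Rop_gen: "Rop c M (gen d) = (if d = c then M else 0)"
  by (simp add: Rop_def gen_def opx_mono Rw_def fun_eq_iff)

lemma Rop_add: "a \<in> polys \<Longrightarrow> b \<in> polys \<Longrightarrow> Rop c M (a + b) = Rop c M a + Rop c M b"
  by (simp add: Rop_def opx_add)
lemma Rop_smul: "a \<in> polys \<Longrightarrow> Rop c M (smul k a) = smul k (Rop c M a)"
  by (simp add: Rop_def opx_smul)
lemma Rop_diff: "a \<in> polys \<Longrightarrow> b \<in> polys \<Longrightarrow> Rop c M (a - b) = Rop c M a - Rop c M b"
  by (simp add: Rop_def opx_diff)
lemma Rop_zero: "Rop c M 0 = 0"
  by (simp add: Rop_def opx_zero)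

lemma Rop_Lie: assumes "a \<in> freeLie" "M \<in> freeLie" shows "Rop c M a \<in> freeLie"
  using assms
proof (induction arbitrary: M rule: freeLie.induct)
  case (fl_gen d) then show ?case by (simp add: Rop_gen freeLie.fl_zero)
next
  case fl_zero then show ?case by (simp add: Rop_zero freeLie.fl_zero)
next
  case (fl_add a b) then show ?case by (simp add: Rop_add freeLie_polys freeLie.fl_add)
next
  case (fl_smul a k) then show ?case by (simp add: Rop_smul freeLie_polys freeLie.fl_smul)
next
  case (fl_bracket a b)
  have pa: "a \<in> polys" and pb: "b \<in> polys" using fl_bracket freeLie_polys by auto
  have "Rop c M (bracket a b) = Rop c (bracket b M) a - Rop c (bracket a M) b"
    unfolding bracket_def Rop_diff[OF polys_nmul[OF pa pb] polys_nmul[OF pb pa]]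
      Rop_nmul[OF pa pb] Rop_nmul[OF pb pa] Rop_diff_M by simp
  moreover have "bracket b M \<in> freeLie" "bracket a M \<in> freeLie"
    using fl_bracket by (simp_all add: freeLie.fl_bracket)
  ultimately show ?case using fl_bracket by (simp add: freeLie_diff)
qed

lemma dcyc_Rop: assumes "g \<in> polys" shows "dcyc c g = Rop c (mono []) g"
proof
  fix v :: "letter list"
  let ?n = "length v"
  let ?phi = "\<lambda>k. (drop k v @ c # take k v, ?n - k)"
  let ?P = "\<lambda>q. fst q ! snd q = c \<and> drop (Suc (snd q)) (fst q) @ take (snd q) (fst q) = v"
  let ?Sig = "Sigma (supp g) (\<lambda>w. {..<length w})"
  let ?K = "{k \<in> {..?n}. drop k v @ c # take k v \<in> supp g}"
  have fin: "finite (supp g)" using assms by (simp add: polys_iff)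
  have "Rop c (mono []) g v = (\<Sum>w\<in>supp g. \<Sum>i<length w. if ?P (w, i) then g w else 0)"
    unfolding Rop_def opx_def Rw_def nmul_one_right nmul_mono_mono
    by (simp add: sum_distrib_left mono_def if_distrib[of "\<lambda>z. g _ * z"] cong: if_cong)
       (intro sum.cong refl, auto)
  also have "\<dots> = (\<Sum>q\<in>?Sig. if ?P q then g (fst q) else 0)"
    using fin by (subst sum.Sigma) (auto simp: case_prod_beta)
  also have "\<dots> = (\<Sum>q\<in>{q\<in>?Sig. ?P q}. g (fst q))"
    using fin by (simp add: sum.inter_filter)
  also have "{q\<in>?Sig. ?P q} = ?phi ` ?K"
  proof (intro equalityI subsetI)
    fix q assume q: "q \<in> {q\<in>?Sig. ?P q}"
    obtain w i where qwi: "q = (w, i)" by (cases q)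
    with q have w: "w \<in> supp g" "i < length w" "w ! i = c" "drop (Suc i) w @ take i w = v" by auto
    define k where "k = length w - Suc i"
    have lv: "?n = length w - 1" using w(2,4) by (auto dest: arg_cong[of _ _ length])
    have lS: "length (drop (Suc i) w) = k" by (simp add: k_def)
    have dk: "drop k v = take i w" "take k v = drop (Suc i) w"
      using w(4) lS by (auto dest: sym)
    have "drop k v @ c # take k v = w"
      using dk w(2,3) id_take_nth_drop[OF w(2)] by simp
    moreover have "?n - k = i" using lv w(2) by (simp add: k_def)
    moreover have "k \<in> ?K" using lv w(1) \<open>drop k v @ c # take k v = w\<close> by (simp add: k_def)
    ultimately show "q \<in> ?phi ` ?K" using qwi by (auto intro: image_eqI[where x=k])
  next
    fix q assume "q \<in> ?phi ` ?K"
    then obtain k where k: "k \<le> ?n" "drop k v @ c # take k v \<in> supp g" and q: "q = ?phi k" by auto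
    have l1: "length (drop k v) = ?n - k" by simp
    show "q \<in> {q\<in>?Sig. ?P q}"
      using k l1 unfolding q by (auto simp: nth_append)
  qed
  also have "(\<Sum>q\<in>?phi ` ?K. g (fst q)) = (\<Sum>k\<in>?K. g (drop k v @ c # take k v))"
  proof (subst sum.reindex)
    show "inj_on ?phi ?K" by (rule inj_onI) auto
  qed simp
  also have "\<dots> = (\<Sum>k\<le>?n. g (drop k v @ c # take k v))"
    by (rule sum.mono_neutral_left) (auto simp: supp_def)
  also have "\<dots> = dcyc c g v" by (simp add: dcyc_def)
  finally show "dcyc c g v = Rop c (mono []) g v" by simp
qed

lemma dcyc_nmul: assumes "p \<in> polys" "q \<in> polys"
  shows "dcyc c (nmul p q) = Rop c q p + Rop c p q"
  using assms by (simp add: dcyc_Rop polys_nmul Rop_nmul)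

lemma dcyc_Lie_prod: "a \<in> freeLie \<Longrightarrow> b \<in> freeLie \<Longrightarrow> dcyc c (nmul a b) \<in> freeLie"
  by (simp add: dcyc_nmul freeLie_polys Rop_Lie freeLie.fl_add)

lemma dcyc_add: "dcyc c (a + b) = dcyc c a + dcyc c b"
  by (simp add: dcyc_def fun_eq_iff sum.distrib)
lemma dcyc_smul: "dcyc c (smul k a) = smul k (dcyc c a)"
  by (simp add: dcyc_def fun_eq_iff smul_def sum_distrib_left)
lemma dcyc_zero: "dcyc c 0 = 0"
  by (simp add: dcyc_def fun_eq_iff)

lemma lspan_polys: assumes "S \<subseteq> polys" "a \<in> lspan S" shows "a \<in> polys"
  using assms(2) by (induction rule: lspan.induct) (use assms(1) in \<open>auto simp: polys_zero polys_add polys_smul\<close>)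

lemma FLrep_polys: "g \<in> FLrep i j \<Longrightarrow> g \<in> polys"
  unfolding FLrep_def by (erule lspan_polys[rotated]) (auto intro: polys_nmul freeLie_polys)

lemma FLrep_dcyc_Lie: "g \<in> FLrep i j \<Longrightarrow> dcyc c g \<in> freeLie"
  unfolding FLrep_def
proof (induction rule: lspan.induct)
  case lspan_zero then show ?case by (simp add: dcyc_zero freeLie.fl_zero)
next
  case (lspan_base a) then show ?case by (auto intro: dcyc_Lie_prod)
next
  case (lspan_add a b) then show ?case
    by (simp add: dcyc_add freeLie.fl_add) 
next
  case (lspan_smul a k) then show ?case by (simp add: dcyc_smul freeLie.fl_smul)
qed

lemma comm_polys: "{nmul p q - nmul q p | p q. p \<in> polys \<and> q \<in> polys} \<subseteq> polys"
  by (auto intro: polys_diff polys_nmul)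

lemma trzero_dcyc: assumes "trzero h" shows "dcyc c h = 0"
proof -
  have "h \<in> polys \<and> Rop c (mono []) h = 0"
    using assms unfolding trzero_def
  proof (induction rule: lspan.induct)
    case lspan_zero then show ?case by (simp add: polys_zero Rop_zero)
  next
    case (lspan_base a)
    then obtain p q where a: "a = nmul p q - nmul q p" "p \<in> polys" "q \<in> polys" by auto
    then show ?case
      by (simp add: polys_diff polys_nmul Rop_diff Rop_nmul)
  next
    case (lspan_add a b) then show ?case by (simp add: polys_add Rop_add)
  next
    case (lspan_smul a k) then show ?case by (simp add: polys_smul Rop_smul smul_zero)
  qed
  then show ?thesis by (simp add: dcyc_Rop)
qed


lemma nmul_gen_right: "nmul a (gen c) v = (if v \<noteq> [] \<and> last v = c then a (butlast v) else 0)"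
proof (cases "v = []")
  case True then show ?thesis by (simp add: gen_def nmul_mono_right)
next
  case False
  then have "drop (length v - 1) v = [last v]"
    by (metis append_butlast_last_id append_eq_conv_conj length_butlast)
  moreover have "take (length v - 1) v = butlast v" by (simp add: butlast_conv_take)
  moreover have "Suc 0 \<le> length v" using False by (cases v) auto
  ultimately show ?thesis using False by (simp add: gen_def nmul_mono_right)
qed

lemma nmul_gen_left: "nmul (gen c) a v = (if v \<noteq> [] \<and> hd v = c then a (tl v) else 0)"
  by (cases v) (simp_all add: gen_def nmul_mono_left drop_Suc)

lemma drop_take_rotate: "m \<le> length v \<Longrightarrow> drop m v @ take m v = rotate m v"
  by (cases "m = length v") (simp_all add: rotate_drop_take)

lemma sum_shift_cyc: "G n = G 0 \<Longrightarrow> (\<Sum>k<n. G (Suc k)) = (\<Sum>k<n. G k)"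
  for G :: "nat \<Rightarrow> real"
  using sum.lessThan_Suc_shift[of G n] sum.lessThan_Suc[of G n] by simp

lemma dcyc_last: assumes "v \<noteq> []"
  shows "dcyc (last v) g (butlast v) = (\<Sum>k<length v. g (rotate k v))"
proof -
  let ?b = "butlast v"
  have vb: "v = ?b @ [last v]" using assms by simp
  have lb: "length ?b = length v - 1" by simp
  have "dcyc (last v) g ?b = (\<Sum>k\<le>length ?b. g (drop k ?b @ last v # take k ?b))" by (simp add: dcyc_def)
  also have "\<dots> = (\<Sum>k<length v. g (rotate k v))"
  proof -
    have "length v = Suc (length ?b)" using assms by simp
    then have "{..length ?b} = {..<length v}" using lessThan_Suc_atMost by metis
    moreover have "g (drop k ?b @ last v # take k ?b) = g (rotate k v)" if "k < length v" for k
    proof -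
      have k': "k \<le> length ?b" using that lb assms by (cases v) auto
      have "drop k (?b @ [last v]) = drop k ?b @ [last v]" "take k (?b @ [last v]) = take k ?b"
        using k' by simp_all
      then have "drop k v = drop k ?b @ [last v]" "take k v = take k ?b" using vb by metis+
      then show ?thesis using drop_take_rotate[of k v] that by simp
    qed
    ultimately show ?thesis by (auto intro!: sum.cong)
  qed
  finally show ?thesis .
qed

lemma dcyc_hd: assumes "v \<noteq> []"
  shows "dcyc (hd v) g (tl v) = (\<Sum>k<length v. g (rotate (Suc k) v))"
proof -
  have vb: "v = hd v # tl v" using assms by simp
  have lv: "length v = Suc (length (tl v))" using assms by (cases v) auto
  have "dcyc (hd v) g (tl v) = (\<Sum>k\<le>length (tl v). g (drop k (tl v) @ hd v # take k (tl v)))"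
    by (simp add: dcyc_def)
  also have "\<dots> = (\<Sum>k<length v. g (rotate (Suc k) v))"
  proof -
    have "{..length (tl v)} = {..<length v}" using lv lessThan_Suc_atMost by metis
    moreover have "g (drop k (tl v) @ hd v # take k (tl v)) = g (rotate (Suc k) v)" if "k < length v" for k
    proof -
      have "drop (Suc k) v = drop k (tl v)" "take (Suc k) v = hd v # take k (tl v)"
        using vb by (metis drop_Suc_Cons, metis take_Suc_Cons)
      then show ?thesis using drop_take_rotate[of "Suc k" v] that by simp
    qed
    ultimately show ?thesis by (auto intro!: sum.cong)
  qed
  finally show ?thesis .
qed

lemma letter_cases: "(c::letter) = X \<or> c = Y" by (cases c) auto

lemma cyc_ident:
  "nmul (dcyc Y g) (gen Y) - nmul (gen Y) (dcyc Y g) + (nmul (dcyc X g) (gen X) - nmul (gen X) (dcyc X g)) = 0"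
proof
  fix v :: "letter list"
  show "(nmul (dcyc Y g) (gen Y) - nmul (gen Y) (dcyc Y g) + (nmul (dcyc X g) (gen X) - nmul (gen X) (dcyc X g))) v = 0 v"
  proof (cases "v = []")
    case True then show ?thesis by (simp add: nmul_gen_left nmul_gen_right)
  next
    case False
    have A: "nmul (dcyc Y g) (gen Y) v + nmul (dcyc X g) (gen X) v = dcyc (last v) g (butlast v)"
      using letter_cases[of "last v"] False by (auto simp: nmul_gen_right)
    have B: "nmul (gen Y) (dcyc Y g) v + nmul (gen X) (dcyc X g) v = dcyc (hd v) g (tl v)"
      using letter_cases[of "hd v"] False by (auto simp: nmul_gen_left)
    have "dcyc (last v) g (butlast v) = dcyc (hd v) g (tl v)"
      unfolding dcyc_last[OF False] dcyc_hd[OF False]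
      by (rule sum_shift_cyc[symmetric]) simp
    then show ?thesis using A B by simp
  qed
qed

lemma split_firstX: "X \<in> set w \<Longrightarrow> \<exists>n v. w = replicate n Y @ X # v"
proof (induction w)
  case Nil then show ?case by simp
next
  case (Cons c w)
  show ?case
  proof (cases c)
    case X then show ?thesis by (metis append.left_neutral replicate_0)
  next
    case Y
    with Cons obtain n v where "w = replicate n Y @ X # v" by auto
    with Y have "c # w = replicate (Suc n) Y @ X # v" by simp
    then show ?thesis by blast
  qed
qed

lemma commY_zero: assumes "nmul G (gen Y) = nmul (gen Y) G" "\<And>w. G w \<noteq> 0 \<Longrightarrow> X \<in> set w"
  shows "G = 0"
proof -
  have main: "G (replicate n Y @ X # v) = 0" for n v
  proof (induction n arbitrary: v)
    case 0
    have "G (X # v) = nmul G (gen Y) (X # v @ [Y])" by (simp add: nmul_gen_right)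
    also have "\<dots> = nmul (gen Y) G (X # v @ [Y])" using assms(1) by simp
    also have "\<dots> = 0" by (simp add: nmul_gen_left)
    finally show ?case by simp
  next
    case (Suc n)
    have "G (replicate (Suc n) Y @ X # v) = nmul G (gen Y) (replicate (Suc n) Y @ X # v @ [Y])"
      by (simp add: nmul_gen_right butlast_append)
    also have "\<dots> = nmul (gen Y) G (replicate (Suc n) Y @ X # v @ [Y])" using assms(1) by simp
    also have "\<dots> = G (replicate n Y @ X # v @ [Y])" by (simp add: nmul_gen_left)
    also have "\<dots> = 0" by (rule Suc.IH)
    finally show ?case .
  qed
  show ?thesis
  proof
    fix w show "G w = 0 w"
    proof (rule ccontr)
      assume "G w \<noteq> 0 w"
      then have "X \<in> set w" using assms(2) by simp
      then obtain n v where "w = replicate n Y @ X # v" using split_firstX by blast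
      then show False using main \<open>G w \<noteq> 0 w\<close> by simp
    qed
  qed
qed


lemma homog_zero: "homog p q 0" by (simp add: homog_def)
lemma homog_add: "homog p q a \<Longrightarrow> homog p q b \<Longrightarrow> homog p q (a + b)"
  by (auto simp: homog_def) (metis add.right_neutral)+
lemma homog_smul: "homog p q a \<Longrightarrow> homog p q (smul c a)"
  by (auto simp: homog_def smul_def)
lemma homog_uminus: "homog p q a \<Longrightarrow> homog p q (- a)"
  by (auto simp: homog_def)
lemma homog_diff: "homog p q a \<Longrightarrow> homog p q b \<Longrightarrow> homog p q (a - b)"
  by (auto simp: homog_def) (metis diff_zero)+
lemma homog_mono: "homog (int (count_list w X)) (int (count_list w Y)) (mono w)"
  by (simp add: homog_def mono_def)

lemma homog_nmul: assumes "homog p1 q1 a" "homog p2 q2 b"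
  shows "homog (p1 + p2) (q1 + q2) (nmul a b)"
  unfolding homog_def
proof (intro allI impI)
  fix w assume "nmul a b w \<noteq> 0"
  then obtain k where "a (take k w) * b (drop k w) \<noteq> 0"
    unfolding nmul_def by (meson sum.neutral)
  then have "a (take k w) \<noteq> 0" "b (drop k w) \<noteq> 0" by auto
  with assms have "int (count_list (take k w) X) = p1" "int (count_list (take k w) Y) = q1"
    "int (count_list (drop k w) X) = p2" "int (count_list (drop k w) Y) = q2"
    by (auto simp: homog_def)
  moreover have "count_list w c = count_list (take k w) c + count_list (drop k w) c" for c
    by (metis append_take_drop_id count_list_append)
  ultimately show "int (count_list w X) = p1 + p2 \<and> int (count_list w Y) = q1 + q2" by simp
qed

lemma homog_bracket: "homog p1 q1 a \<Longrightarrow> homog p2 q2 b \<Longrightarrow> homog (p1 + p2) (q1 + q2) (bracket a b)"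
  unfolding bracket_def by (metis add.commute homog_diff homog_nmul)

lemma homog_sum: "(\<And>i. i \<in> I \<Longrightarrow> homog p q (f i)) \<Longrightarrow> homog p q (\<lambda>v. \<Sum>i\<in>I. f i v)"
  unfolding homog_def by (metis (mono_tags, lifting) sum.neutral)

lemma homog_opx: "(\<And>w. w \<in> supp g \<Longrightarrow> homog p q (f w)) \<Longrightarrow> homog p q (opx f g)"
  unfolding opx_def
  by (rule homog_sum[where f = "\<lambda>w v. g w * f w v", simplified]) (auto simp: homog_def)

lemma homog_lspan: assumes "\<And>a. a \<in> S \<Longrightarrow> homog p q a" "a \<in> lspan S" shows "homog p q a"
  using assms(2) by (induction rule: lspan.induct) (auto simp: assms(1) homog_zero homog_add homog_smul)

lemma FLrep_homog: "g \<in> FLrep i j \<Longrightarrow> homog (int i) (int j) g"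
  unfolding FLrep_def by (erule homog_lspan[rotated]) (auto dest: homog_nmul)

lemma count_split: "i < length w \<Longrightarrow>
   count_list w c = count_list (take i w) c + count_list (drop (Suc i) w) c + (if w ! i = c then 1 else 0)"
  by (subst id_take_nth_drop[of i w]) (simp_all add: count_list_append)

lemma dcyc_homog: assumes "homog p q g"
  shows "homog (p - 1) q (dcyc X g)" "homog p (q - 1) (dcyc Y g)"
proof -
  have cnt: "count_list (drop k v @ c # take k v) d = count_list v d + (if c = d then 1 else 0)" for k v c d
    using count_list_append[of "take k v" "drop k v" d] by simp
  have ex: "dcyc c g v \<noteq> 0 \<Longrightarrow> \<exists>k. g (drop k v @ c # take k v) \<noteq> 0" for c v
    unfolding dcyc_def by (meson sum.neutral)
  show "homog (p - 1) q (dcyc X g)" unfolding homog_def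
  proof (intro allI impI)
    fix w assume "dcyc X g w \<noteq> 0"
    then obtain k where "g (drop k w @ X # take k w) \<noteq> 0" using ex by blast
    then show "int (count_list w X) = p - 1 \<and> int (count_list w Y) = q"
      using assms cnt[of k w X X] cnt[of k w X Y] unfolding homog_def by force
  qed
  show "homog p (q - 1) (dcyc Y g)" unfolding homog_def
  proof (intro allI impI)
    fix w assume "dcyc Y g w \<noteq> 0"
    then obtain k where "g (drop k w @ Y # take k w) \<noteq> 0" using ex by blast
    then show "int (count_list w X) = p \<and> int (count_list w Y) = q - 1"
      using assms cnt[of k w Y X] cnt[of k w Y Y] unfolding homog_def by force
  qed
qed

lemma Dw_homog: assumes "homog (1 + dp) dq a" "homog dp (1 + dq) b"
  shows "homog (int (count_list w X) + dp) (int (count_list w Y) + dq) (Dw a b w)"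
  unfolding Dw_def
proof (rule homog_sum)
  fix i assume "i \<in> {..<length w}"
  then have i: "i < length w" by simp
  show "homog (int (count_list w X) + dp) (int (count_list w Y) + dq)
    (nmul (nmul (mono (take i w)) (if w ! i = X then a else b)) (mono (drop (Suc i) w)))"
  proof (cases "w ! i = X")
    case True
    have "homog (int (count_list (take i w) X) + (1 + dp) + int (count_list (drop (Suc i) w) X))
         (int (count_list (take i w) Y) + dq + int (count_list (drop (Suc i) w) Y))
         (nmul (nmul (mono (take i w)) a) (mono (drop (Suc i) w)))"
      by (intro homog_nmul homog_mono assms)
    then show ?thesis using True count_split[OF i, of X] count_split[OF i, of Y]
      by (simp add: algebra_simps)
  next
    case False
    then have "w ! i = Y" using letter_cases by blast
    have "homog (int (count_list (take i w) X) + dp + int (count_list (drop (Suc i) w) X))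
         (int (count_list (take i w) Y) + (1 + dq) + int (count_list (drop (Suc i) w) Y))
         (nmul (nmul (mono (take i w)) b) (mono (drop (Suc i) w)))"
      by (intro homog_nmul homog_mono assms)
    then show ?thesis using False \<open>w ! i = Y\<close> count_split[OF i, of X] count_split[OF i, of Y]
      by (simp add: algebra_simps)
  qed
qed

lemma derA_homog: assumes "homog (1 + dp) dq a" "homog dp (1 + dq) b" "homog p q l"
  shows "homog (p + dp) (q + dq) (derA a b l)"
  unfolding derA_opx
proof (rule homog_opx)
  fix w assume "w \<in> supp l"
  then have "int (count_list w X) = p" "int (count_list w Y) = q"
    using assms(3) by (auto simp: homog_def supp_def)
  then show "homog (p + dp) (q + dq) (Dw a b w)" using Dw_homog[OF assms(1,2), of w] by simp
qed

lemma uGamma_DerL: assumes "g \<in> FLrep i j" shows "uGamma g \<in> DerL"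
proof -
  let ?a = "dcyc Y g" and ?b = "- dcyc X g"
  have a: "?a \<in> freeLie" and b: "?b \<in> freeLie"
    using FLrep_dcyc_Lie[OF assms] freeLie_uminus by auto
  show ?thesis unfolding DerL_def uGamma_def
    using derA_Lie[OF a b] a b
    by (auto simp: freeLie.fl_add freeLie.fl_smul freeLie.fl_bracket derA_add derA_smul derA_bracket freeLie_polys)
qed

lemma DerL_zero: assumes "D \<in> DerL" shows "D 0 = 0"
proof -
  have "D (0 + 0) = D 0 + D 0" using assms freeLie.fl_zero unfolding DerL_def by blast
  then show ?thesis by simp
qed

lemma DerL_unique: assumes "D1 \<in> DerL" "D2 \<in> DerL" "D1 (gen X) = D2 (gen X)" "D1 (gen Y) = D2 (gen Y)"
  shows "D1 = D2"
proof
  fix l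
  show "D1 l = D2 l"
  proof (cases "l \<in> freeLie")
    case True then show ?thesis
    proof (induction rule: freeLie.induct)
      case (fl_gen c) then show ?case using assms letter_cases[of c] by auto
    next
      case fl_zero then show ?case using DerL_zero assms by simp
    next
      case (fl_add a b) then show ?case using assms unfolding DerL_def by simp
    next
      case (fl_smul a c) then show ?case using assms unfolding DerL_def by simp
    next
      case (fl_bracket a b) then show ?case using assms unfolding DerL_def by simp
    qed
  next
    case False then show ?thesis using assms unfolding DerL_def by simp
  qed
qed

lemma DerL_bracket_xy: "D \<in> DerL \<Longrightarrow>
   D (bracket (gen X) (gen Y)) = bracket (D (gen X)) (gen Y) + bracket (gen X) (D (gen Y))"
  unfolding DerL_def using freeLie.fl_gen by blast

lemma uGamma_gen: "uGamma g (gen X) = dcyc Y g" "uGamma g (gen Y) = - dcyc X g"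
  by (simp_all add: uGamma_def freeLie.fl_gen derA_gen)

lemma uGamma_xy: assumes "g \<in> FLrep i j" shows "uGamma g (bracket (gen X) (gen Y)) = 0"
proof -
  have "uGamma g (bracket (gen X) (gen Y)) = bracket (dcyc Y g) (gen Y) + bracket (gen X) (- dcyc X g)"
    using DerL_bracket_xy[OF uGamma_DerL[OF assms]] uGamma_gen by simp
  also have "\<dots> = 0" using cyc_ident[of g]
    by (simp add: bracket_def nmul_uminus_left nmul_uminus_right algebra_simps)
  finally show ?thesis .
qed


fun mon :: "letter list \<Rightarrow> (nat \<Rightarrow> real) \<Rightarrow> real" where
  "mon [] t = 1"
| "mon (Y # w) t = t 0 * mon w t"
| "mon (X # w) t = mon w (\<lambda>i. t (Suc i))"

definition shift :: "nat \<Rightarrow> (nat \<Rightarrow> real) \<Rightarrow> nat \<Rightarrow> real" where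
  "shift k t = (\<lambda>i. t (i + k))"

definition ev :: "ncs \<Rightarrow> (nat \<Rightarrow> real) \<Rightarrow> real" where
  "ev a t = (\<Sum>w\<in>supp a. a w * mon w t)"

definition Xhom :: "nat \<Rightarrow> ncs \<Rightarrow> bool" where
  "Xhom k a \<longleftrightarrow> (\<forall>w. a w \<noteq> 0 \<longrightarrow> count_list w X = k)"

lemma shift0[simp]: "shift 0 t = t" by (simp add: shift_def)

lemma mon_append: "mon (u @ w) t = mon u t * mon w (shift (count_list u X) t)"
proof (induction u arbitrary: t)
  case Nil then show ?case by simp
next
  case (Cons c u)
  show ?case
  proof (cases c)
    case X
    have "shift (count_list u X) (\<lambda>i. t (Suc i)) = shift (count_list (c # u) X) t"
      using X by (simp add: shift_def)
    then show ?thesis using X Cons[of "\<lambda>i. t (Suc i)"] by simp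
  next
    case Y
    then show ?thesis using Cons[of t] by simp
  qed
qed

lemma mon_cong: "(\<And>i. i \<le> count_list w X \<Longrightarrow> t i = t' i) \<Longrightarrow> mon w t = mon w t'"
proof (induction w arbitrary: t t')
  case Nil then show ?case by simp
next
  case (Cons c w)
  show ?case
  proof (cases c)
    case X
    have "mon w (\<lambda>i. t (Suc i)) = mon w (\<lambda>i. t' (Suc i))"
      by (rule Cons.IH) (use Cons.prems X in simp)
    then show ?thesis using X by simp
  next
    case Y
    have "mon w t = mon w t'" by (rule Cons.IH) (use Cons.prems Y in simp)
    moreover have "t 0 = t' 0" using Cons.prems by simp
    ultimately show ?thesis using Y by simp
  qed
qed

lemma mon_repY: "mon (replicate n Y) t = t 0 ^ n"
  by (induction n) simp_all

lemma ev_opx: "ev a t = opx (\<lambda>w v. mon w t) a []"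
  by (simp add: ev_def opx_def)

lemma ev_superset: "finite S \<Longrightarrow> supp a \<subseteq> S \<Longrightarrow> ev a t = (\<Sum>w\<in>S. a w * mon w t)"
  unfolding ev_def by (rule sum.mono_neutral_left) (auto simp: supp_def)

lemma ev_add: "a \<in> polys \<Longrightarrow> b \<in> polys \<Longrightarrow> ev (a + b) t = ev a t + ev b t"
  by (simp add: ev_opx opx_add)
lemma ev_diff: "a \<in> polys \<Longrightarrow> b \<in> polys \<Longrightarrow> ev (a - b) t = ev a t - ev b t"
  by (simp add: ev_opx opx_diff)
lemma ev_smul: assumes "a \<in> polys" shows "ev (smul c a) t = c * ev a t"
  using opx_smul[OF assms, of "\<lambda>w v. mon w t" c] unfolding ev_opx smul_def by simp
lemma ev_uminus: "a \<in> polys \<Longrightarrow> ev (- a) t = - ev a t"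
  by (simp add: ev_opx opx_uminus)
lemma ev_zero: "ev 0 t = 0"
  by (simp add: ev_opx opx_zero)
lemma ev_mono: "ev (mono w) t = mon w t"
  by (simp add: ev_opx opx_mono)
lemma ev_genX: "ev (gen X) t = 1" by (simp add: gen_def ev_mono)
lemma ev_genY: "ev (gen Y) t = t 0" by (simp add: gen_def ev_mono)

lemma ev_nmul: assumes "p \<in> polys" "q \<in> polys" "Xhom k p"
  shows "ev (nmul p q) t = ev p t * ev q (shift k t)"
proof -
  have "ev (nmul p q) t = (\<Sum>x\<in>supp p. \<Sum>y\<in>supp q. p x * q y * mon (x @ y) t)"
    unfolding ev_opx opx_nmul[OF assms(1,2)] by simp
  also have "\<dots> = (\<Sum>x\<in>supp p. \<Sum>y\<in>supp q. (p x * mon x t) * (q y * mon y (shift k t)))"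
    using assms(3) by (intro sum.cong refl) (simp add: mon_append Xhom_def supp_def)
  also have "\<dots> = ev p t * ev q (shift k t)"
    by (simp add: ev_def sum_product)
  finally show ?thesis .
qed

lemma sum_atMost_flip: "(\<Sum>i\<le>n. g i) = (\<Sum>i\<le>n. g (n - i))" for g :: "nat \<Rightarrow> 'a::comm_monoid_add"
  by (rule sum.reindex_bij_witness[where i="\<lambda>i. n - i" and j="\<lambda>i. n - i"]) auto

definition rvsign :: "ncs \<Rightarrow> bool" where
  "rvsign a \<longleftrightarrow> (\<forall>w. a (rev w) = - ((-1) ^ length w) * a w)"

lemma rvsign_nmul: assumes "rvsign a" "rvsign b"
  shows "nmul a b (rev w) = (-1) ^ length w * nmul b a w"
proof -
  let ?n = "length w"
  have "nmul a b (rev w) = (\<Sum>k\<le>?n. a (rev (drop (?n - k) w)) * b (rev (take (?n - k) w)))"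
    by (simp add: nmul_def take_rev drop_rev)
  also have "\<dots> = (\<Sum>m\<le>?n. a (rev (drop m w)) * b (rev (take m w)))"
    by (subst sum_atMost_flip) (intro sum.cong refl, simp)
  also have "\<dots> = (\<Sum>m\<le>?n. (-1) ^ ?n * (b (take m w) * a (drop m w)))"
  proof (intro sum.cong refl)
    fix m assume "m \<in> {..?n}"
    then have "(-1::real) ^ (?n - m) * (-1) ^ m = (-1) ^ ?n" by (simp add: power_add[symmetric])
    then show "a (rev (drop m w)) * b (rev (take m w)) = (-1) ^ ?n * (b (take m w) * a (drop m w))"
      using assms unfolding rvsign_def by (simp add: min_def)
  qed
  also have "\<dots> = (-1) ^ ?n * nmul b a w"
    by (simp add: nmul_def sum_distrib_left)
  finally show ?thesis .
qed

lemma Lie_rvsign: "l \<in> freeLie \<Longrightarrow> rvsign l"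
proof (induction rule: freeLie.induct)
  case (fl_gen c) then show ?case
  proof -
    have "rev w = [c] \<longleftrightarrow> w = [c]" for w by (metis rev_rev_ident rev_singleton_conv)
    then show ?thesis unfolding rvsign_def gen_def mono_def by auto
  qed
next
  case fl_zero then show ?case by (simp add: rvsign_def)
next
  case (fl_add a b) then show ?case by (simp add: rvsign_def algebra_simps)
next
  case (fl_smul a c) then show ?case by (simp add: rvsign_def smul_def)
next
  case (fl_bracket a b)
  show ?case unfolding rvsign_def
  proof
    fix w
    have "nmul a b (rev w) = (-1) ^ length w * nmul b a w" "nmul b a (rev w) = (-1) ^ length w * nmul a b w"
      using fl_bracket by (simp_all add: rvsign_nmul)
    then show "bracket a b (rev w) = - ((-1) ^ length w) * bracket a b w"
      unfolding bracket_def by (simp add: right_diff_distrib)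
  qed
qed


lemma rep_X_inj: "replicate n Y @ X # w = replicate m Y @ X # v \<Longrightarrow> n = m \<and> w = v"
proof (induction n arbitrary: m)
  case 0 then show ?case by (cases m) auto
next
  case (Suc n) then show ?case by (cases m) auto
qed

lemma cnt_repY: "count_list (replicate n Y) X = 0" by (induction n) auto

lemma noX_rep: "count_list w X = 0 \<Longrightarrow> w = replicate (length w) Y"
proof (induction w)
  case Nil then show ?case by simp
next
  case (Cons c w) then show ?case using letter_cases[of c] by (auto split: if_splits)
qed

lemma ev_sum: assumes "finite I" "\<And>i. i \<in> I \<Longrightarrow> f i \<in> polys"
  shows "(\<lambda>v. \<Sum>i\<in>I. f i v) \<in> polys \<and> ev (\<lambda>v. \<Sum>i\<in>I. f i v) t = (\<Sum>i\<in>I. ev (f i) t)"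
  using assms
proof (induction I rule: finite_induct)
  case empty then show ?case by (simp add: polys_zero ev_zero)
next
  case (insert x F)
  have e: "(\<lambda>v. \<Sum>i\<in>insert x F. f i v) = f x + (\<lambda>v. \<Sum>i\<in>F. f i v)"
    using insert by (simp add: fun_eq_iff)
  show ?case unfolding e using insert by (simp add: polys_add ev_add)
qed

lemma inj_ev: "a \<in> polys \<Longrightarrow> Xhom k a \<Longrightarrow> (\<And>t. ev a t = 0) \<Longrightarrow> a = 0"
proof (induction k arbitrary: a)
  case 0
  have fin: "finite (supp a)" using 0 by (simp add: polys_iff)
  obtain N where N: "\<And>w. w \<in> supp a \<Longrightarrow> length w \<le> N"
    using finite_nat_set_iff_bounded_le[THEN iffD1, OF finite_imageI[OF fin, of length]] by auto
  have rep: "w \<in> supp a \<Longrightarrow> w = replicate (length w) Y" for w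
    using 0 by (intro noX_rep) (simp add: Xhom_def supp_def)
  have sub: "supp a \<subseteq> (\<lambda>n. replicate n Y) ` {..N}"
    using rep N by (auto intro: image_eqI)
  have inj: "inj_on (\<lambda>n. replicate n Y) {..N}" by (rule inj_onI) (metis length_replicate)
  have evf: "ev a t = (\<Sum>n\<le>N. a (replicate n Y) * t 0 ^ n)" for t
  proof -
    have "ev a t = (\<Sum>w\<in>(\<lambda>n. replicate n Y) ` {..N}. a w * mon w t)"
      by (rule ev_superset[OF finite_imageI[OF finite_atMost] sub])
    also have "\<dots> = (\<Sum>n\<le>N. a (replicate n Y) * mon (replicate n Y) t)"
      by (simp add: sum.reindex[OF inj])
    finally show ?thesis by (simp add: mon_repY)
  qed
  have "\<forall>z. (\<Sum>n\<le>N. a (replicate n Y) * z ^ n) = 0"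
  proof
    fix z
    show "(\<Sum>n\<le>N. a (replicate n Y) * z ^ n) = 0" using evf[of "\<lambda>_. z"] 0(3)[of "\<lambda>_. z"] by simp
  qed
  then have z: "\<And>n. n \<le> N \<Longrightarrow> a (replicate n Y) = 0"
    using polyfun_eq_0[where n=N and c="\<lambda>n. a (replicate n Y)"] by auto
  show ?case
  proof
    fix w show "a w = 0 w"
    proof (rule ccontr)
      assume aw: "a w \<noteq> 0 w"
      then have w: "w \<in> supp a" by (simp add: supp_def)
      have "a w = a (replicate (length w) Y)" using rep[OF w] by simp
      also have "\<dots> = 0" using z[OF N[OF w]] .
      finally show False using aw by simp
    qed
  qed
next
  case (Suc k)
  have fin: "finite (supp a)" using Suc by (simp add: polys_iff)
  obtain N where N: "\<And>w. w \<in> supp a \<Longrightarrow> length w \<le> N"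
    using finite_nat_set_iff_bounded_le[THEN iffD1, OF finite_imageI[OF fin, of length]] by auto
  define phi where "phi = (\<lambda>(n, w'). replicate n Y @ X # w')"
  define an where "an = (\<lambda>n w'. a (replicate n Y @ X # w'))"
  have inj1: "inj (\<lambda>w'. replicate n Y @ X # w')" for n by (rule injI) (metis rep_X_inj)
  have an_poly: "an n \<in> polys" for n
  proof -
    have "supp (an n) \<subseteq> (\<lambda>w'. replicate n Y @ X # w') -` supp a" by (auto simp: supp_def an_def)
    moreover have "finite ((\<lambda>w'. replicate n Y @ X # w') -` supp a)"
      using fin inj1 by (simp add: finite_vimageI)
    ultimately show ?thesis by (simp add: polys_iff finite_subset)
  qed
  have an_hom: "Xhom k (an n)" for n
    unfolding Xhom_def
  proof (intro allI impI)
    fix w assume "an n w \<noteq> 0"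
    then have "count_list (replicate n Y @ X # w) X = Suc k"
      using Suc.prems(2) unfolding Xhom_def an_def by blast
    then show "count_list w X = k" by (simp add: count_list_append cnt_repY)
  qed
  let ?Sig = "Sigma {..N} (\<lambda>n. supp (an n))"
  have inj: "inj_on phi ?Sig" by (rule inj_onI) (auto simp: phi_def dest: rep_X_inj)
  have img: "phi ` ?Sig = supp a"
  proof (intro equalityI subsetI)
    fix w assume "w \<in> phi ` ?Sig" then show "w \<in> supp a" by (auto simp: phi_def an_def supp_def)
  next
    fix w assume w: "w \<in> supp a"
    then have "count_list w X = Suc k" using Suc.prems(2) by (simp add: Xhom_def supp_def)
    then have "X \<in> set w" by (metis count_notin Suc_neq_Zero)
    then obtain n w' where ww: "w = replicate n Y @ X # w'" using split_firstX by blast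
    then have "n \<le> N" using N[OF w] by simp
    moreover have "w' \<in> supp (an n)" using w ww by (simp add: an_def supp_def)
    ultimately have "(n, w') \<in> ?Sig" by simp
    moreover have "w = phi (n, w')" using ww by (simp add: phi_def)
    ultimately show "w \<in> phi ` ?Sig" by blast
  qed
  have monrep: "mon (replicate n Y @ X # w') t = t 0 ^ n * mon w' (shift 1 t)" for n w' t
  proof -
    have "shift 1 t = (\<lambda>i. t (Suc i))" by (simp add: shift_def)
    then show ?thesis by (simp add: mon_append mon_repY cnt_repY)
  qed
  have expand: "ev a t = (\<Sum>n\<le>N. ev (an n) (shift 1 t) * t 0 ^ n)" for t
  proof -
    have "ev a t = (\<Sum>w\<in>phi ` ?Sig. a w * mon w t)" unfolding img ev_def ..
    also have "\<dots> = (\<Sum>q\<in>?Sig. a (phi q) * mon (phi q) t)" by (simp add: sum.reindex[OF inj])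
    also have "\<dots> = (\<Sum>(n,w')\<in>?Sig. an n w' * (t 0 ^ n * mon w' (shift 1 t)))"
      by (intro sum.cong refl) (auto simp: phi_def an_def monrep)
    also have "\<dots> = (\<Sum>n\<le>N. \<Sum>w'\<in>supp (an n). an n w' * (t 0 ^ n * mon w' (shift 1 t)))"
      by (rule sum.Sigma[symmetric]) (auto simp: an_poly[unfolded polys_iff])
    also have "\<dots> = (\<Sum>n\<le>N. ev (an n) (shift 1 t) * t 0 ^ n)"
      unfolding ev_def sum_distrib_right by (intro sum.cong refl) (simp add: mult.commute mult.left_commute)
    finally show ?thesis .
  qed
  have zero_an: "an n = 0" if "n \<le> N" for n
  proof (rule Suc.IH[OF an_poly an_hom])
    fix s
    define t where "t = (\<lambda>z::real. \<lambda>i::nat. if i = 0 then z else s (i - 1))"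
    have sh: "shift 1 (t z) = s" for z by (simp add: t_def shift_def fun_eq_iff)
    have t0: "t z 0 = z" for z by (simp add: t_def)
    have "\<forall>z. (\<Sum>n\<le>N. ev (an n) s * z ^ n) = 0"
    proof
      fix z show "(\<Sum>n\<le>N. ev (an n) s * z ^ n) = 0"
        using expand[of "t z"] Suc.prems(3)[of "t z"] sh[of z] t0[of z] by simp
    qed
    then show "ev (an n) s = 0" using polyfun_eq_0[where n=N and c="\<lambda>n. ev (an n) s"] that by auto
  qed
  show ?case
  proof
    fix w show "a w = 0 w"
    proof (rule ccontr)
      assume "a w \<noteq> 0 w"
      then have "w \<in> supp a" by (simp add: supp_def)
      then obtain q where q: "q \<in> ?Sig" "w = phi q" using img by blast
      obtain n w' where nw: "q = (n, w')" by (cases q)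
      have "n \<le> N" "w' \<in> supp (an n)" using q nw by auto
      then have "an n w' \<noteq> 0" by (simp add: supp_def)
      moreover have "an n = 0" using zero_an \<open>n \<le> N\<close> by simp
      ultimately show False by simp
    qed
  qed
qed


definition xcomp :: "nat \<Rightarrow> ncs \<Rightarrow> ncs" where
  "xcomp k a = (\<lambda>w. if count_list w X = k then a w else 0)"

lemma xcomp_polys: "a \<in> polys \<Longrightarrow> xcomp k a \<in> polys"
  unfolding polys_iff by (erule finite_subset[rotated]) (auto simp: supp_def xcomp_def)
lemma xcomp_Xhom: "Xhom k (xcomp k a)" by (simp add: Xhom_def xcomp_def)
lemma xcomp_add: "xcomp k (a + b) = xcomp k a + xcomp k b" by (simp add: xcomp_def fun_eq_iff)
lemma xcomp_diff: "xcomp k (a - b) = xcomp k a - xcomp k b" by (simp add: xcomp_def fun_eq_iff)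
lemma xcomp_smul: "xcomp k (smul c a) = smul c (xcomp k a)" by (simp add: xcomp_def smul_def fun_eq_iff)
lemma xcomp_zero: "xcomp k 0 = 0" by (simp add: xcomp_def fun_eq_iff)
lemma xcomp_id: "Xhom k a \<Longrightarrow> xcomp k a = a" by (auto simp: xcomp_def Xhom_def fun_eq_iff)
lemma xcomp_genX: "xcomp k (gen X) = (if k = 1 then gen X else 0)"
  by (auto simp: xcomp_def gen_def mono_def fun_eq_iff)
lemma xcomp_genY: "xcomp k (gen Y) = (if k = 0 then gen Y else 0)"
  by (auto simp: xcomp_def gen_def mono_def fun_eq_iff)

lemma xcomp_nmul: "xcomp k (nmul a b) = (\<lambda>v. \<Sum>i\<le>k. nmul (xcomp i a) (xcomp (k - i) b) v)"
proof
  fix v :: "letter list"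
  have cnt: "count_list (take l v) X + count_list (drop l v) X = count_list v X" for l
    by (metis append_take_drop_id count_list_append)
  have "(\<Sum>i\<le>k. nmul (xcomp i a) (xcomp (k - i) b) v)
      = (\<Sum>i\<le>k. \<Sum>l\<le>length v. if count_list (take l v) X = i \<and> count_list (drop l v) X = k - i
            then a (take l v) * b (drop l v) else 0)"
    unfolding nmul_def xcomp_def by (intro sum.cong refl) auto
  also have "\<dots> = (\<Sum>l\<le>length v. \<Sum>i\<le>k. if count_list (take l v) X = i \<and> count_list (drop l v) X = k - i
            then a (take l v) * b (drop l v) else 0)"
    by (rule sum.swap)
  also have "\<dots> = (\<Sum>l\<le>length v. if count_list v X = k then a (take l v) * b (drop l v) else 0)"
  proof (intro sum.cong refl)
    fix l
    have "(\<Sum>i\<le>k. if count_list (take l v) X = i \<and> count_list (drop l v) X = k - i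
            then a (take l v) * b (drop l v) else 0)
        = (\<Sum>i\<le>k. if i = count_list (take l v) X then
            (if count_list v X = k then a (take l v) * b (drop l v) else 0) else 0)"
      using cnt[of l] by (intro sum.cong refl) auto
    also have "\<dots> = (if count_list v X = k then a (take l v) * b (drop l v) else 0)"
      using cnt[of l] by (auto simp: sum.delta')
    finally show "(\<Sum>i\<le>k. if count_list (take l v) X = i \<and> count_list (drop l v) X = k - i
            then a (take l v) * b (drop l v) else 0) = (if count_list v X = k then a (take l v) * b (drop l v) else 0)" .
  qed
  also have "\<dots> = xcomp k (nmul a b) v"
    by (simp add: xcomp_def nmul_def)
  finally show "xcomp k (nmul a b) v = (\<Sum>i\<le>k. nmul (xcomp i a) (xcomp (k - i) b) v)" by simp
qed

lemma xcomp_nmul': "xcomp k (nmul a b) = (\<lambda>v. \<Sum>i\<le>k. nmul (xcomp (k - i) a) (xcomp i b) v)"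
  unfolding xcomp_nmul
  by (rule ext, subst sum_atMost_flip) (intro sum.cong refl, simp)

lemma ev_comp_nmul: assumes "a \<in> polys" "b \<in> polys"
  shows "ev (xcomp k (nmul a b)) t = (\<Sum>i\<le>k. ev (xcomp i a) t * ev (xcomp (k - i) b) (shift i t))"
proof -
  have "ev (xcomp k (nmul a b)) t = (\<Sum>i\<le>k. ev (nmul (xcomp i a) (xcomp (k - i) b)) t)"
    unfolding xcomp_nmul using assms by (intro conjunct2[OF ev_sum]) (auto intro: polys_nmul xcomp_polys)
  also have "\<dots> = (\<Sum>i\<le>k. ev (xcomp i a) t * ev (xcomp (k - i) b) (shift i t))"
    using assms by (intro sum.cong refl ev_nmul xcomp_polys xcomp_Xhom)
  finally show ?thesis .
qed

lemma ev_comp_nmul': assumes "a \<in> polys" "b \<in> polys"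
  shows "ev (xcomp k (nmul a b)) t = (\<Sum>i\<le>k. ev (xcomp (k - i) a) t * ev (xcomp i b) (shift (k - i) t))"
proof -
  have "ev (xcomp k (nmul a b)) t = (\<Sum>i\<le>k. ev (nmul (xcomp (k - i) a) (xcomp i b)) t)"
    unfolding xcomp_nmul' using assms by (intro conjunct2[OF ev_sum]) (auto intro: polys_nmul xcomp_polys)
  also have "\<dots> = (\<Sum>i\<le>k. ev (xcomp (k - i) a) t * ev (xcomp i b) (shift (k - i) t))"
    using assms by (intro sum.cong refl ev_nmul xcomp_polys xcomp_Xhom)
  finally show ?thesis .
qed

definition TIp :: "ncs \<Rightarrow> bool" where
  "TIp l \<longleftrightarrow> (\<exists>\<alpha>. \<forall>t. ev (xcomp 0 l) t = \<alpha> * t 0) \<and>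
     (\<forall>k t c. 0 < k \<longrightarrow> ev (xcomp k l) (\<lambda>i. t i + c) = ev (xcomp k l) t)"

lemma shift_plus: "shift m (\<lambda>j. t j + c) = (\<lambda>j. shift m t j + c)" by (simp add: shift_def)
lemma shift_apply0: "shift m t 0 = t m" by (simp add: shift_def)

lemma TIp_bracket: assumes "a \<in> polys" "b \<in> polys" "TIp a" "TIp b"
  shows "TIp (bracket a b)"
proof -
  obtain \<alpha> where al: "\<And>t. ev (xcomp 0 a) t = \<alpha> * t 0" using assms(3) by (auto simp: TIp_def)
  obtain \<beta> where be: "\<And>t. ev (xcomp 0 b) t = \<beta> * t 0" using assms(4) by (auto simp: TIp_def)
  have A: "\<And>k t c. 0 < k \<Longrightarrow> ev (xcomp k a) (\<lambda>i. t i + c) = ev (xcomp k a) t" using assms(3) by (auto simp: TIp_def)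
  have B: "\<And>k t c. 0 < k \<Longrightarrow> ev (xcomp k b) (\<lambda>i. t i + c) = ev (xcomp k b) t" using assms(4) by (auto simp: TIp_def)
  define T where "T = (\<lambda>k i t. ev (xcomp i a) t * ev (xcomp (k - i) b) (shift i t)
      - ev (xcomp (k - i) b) t * ev (xcomp i a) (shift (k - i) t))"
  have evb: "ev (xcomp k (bracket a b)) t = (\<Sum>i\<le>k. T k i t)" for k t
  proof -
    have "ev (xcomp k (bracket a b)) t = ev (xcomp k (nmul a b)) t - ev (xcomp k (nmul b a)) t"
      unfolding bracket_def xcomp_diff using assms by (intro ev_diff xcomp_polys polys_nmul)
    also have "\<dots> = (\<Sum>i\<le>k. T k i t)"
      unfolding ev_comp_nmul[OF assms(1,2)] ev_comp_nmul'[OF assms(2,1)] T_def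
      by (simp add: sum_subtractf)
    finally show ?thesis .
  qed
  have "ev (xcomp 0 (bracket a b)) t = 0 * t 0" for t
    unfolding evb T_def by simp
  moreover have "ev (xcomp k (bracket a b)) (\<lambda>i. t i + c) = ev (xcomp k (bracket a b)) t" if k: "0 < k" for k t c
    unfolding evb
  proof (intro sum.cong refl)
    fix i assume "i \<in> {..k}"
    then have ik: "i \<le> k" by simp
    show "T k i (\<lambda>i. t i + c) = T k i t"
    proof (cases "i = 0")
      case True
      then show ?thesis using k unfolding T_def shift_plus
        by (simp add: al B shift_apply0) (simp add: algebra_simps)
    next
      case False
      show ?thesis
      proof (cases "i = k")
        case True
        then show ?thesis using k unfolding T_def shift_plus
          by (simp add: be A shift_apply0) (simp add: algebra_simps)
      next
        case False
        then have "0 < k - i" using ik by simp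
        then show ?thesis using \<open>i \<noteq> 0\<close> unfolding T_def shift_plus
          by (simp add: A B)
      qed
    qed
  qed
  ultimately show ?thesis unfolding TIp_def by blast
qed

lemma Lie_TIp: "l \<in> freeLie \<Longrightarrow> TIp l"
proof (induction rule: freeLie.induct)
  case (fl_gen c)
  show ?case
  proof (cases c)
    case X then show ?thesis
      by (auto simp: TIp_def xcomp_genX ev_zero ev_genX intro: exI[where x=0])
  next
    case Y then show ?thesis
      by (auto simp: TIp_def xcomp_genY ev_zero ev_genY intro: exI[where x=1])
  qed
next
  case fl_zero then show ?case by (simp add: TIp_def xcomp_zero ev_zero)
next
  case (fl_add a b)
  then have pa: "a \<in> polys" "b \<in> polys" by (simp_all add: freeLie_polys)
  from fl_add obtain \<alpha> \<beta> where "\<And>t. ev (xcomp 0 a) t = \<alpha> * t 0" "\<And>t. ev (xcomp 0 b) t = \<beta> * t 0"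
    by (auto simp: TIp_def)
  then have "ev (xcomp 0 (a + b)) t = (\<alpha> + \<beta>) * t 0" for t
    using pa by (simp add: xcomp_add ev_add xcomp_polys algebra_simps)
  moreover have "ev (xcomp k (a + b)) (\<lambda>i. t i + c) = ev (xcomp k (a + b)) t" if "0 < k" for k t c
    using pa fl_add that by (simp add: xcomp_add ev_add xcomp_polys TIp_def)
  ultimately show ?case unfolding TIp_def by blast
next
  case (fl_smul a c)
  then have pa: "a \<in> polys" by (simp add: freeLie_polys)
  from fl_smul obtain \<alpha> where "\<And>t. ev (xcomp 0 a) t = \<alpha> * t 0" by (auto simp: TIp_def)
  then have "ev (xcomp 0 (smul c a)) t = (c * \<alpha>) * t 0" for t
    using pa by (simp add: xcomp_smul ev_smul xcomp_polys)
  moreover have "ev (xcomp k (smul c a)) (\<lambda>i. t i + d) = ev (xcomp k (smul c a)) t" if "0 < k" for k t d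
    using pa fl_smul that by (simp add: xcomp_smul ev_smul xcomp_polys TIp_def)
  ultimately show ?case unfolding TIp_def by blast
next
  case (fl_bracket a b) then show ?case by (simp add: TIp_bracket freeLie_polys)
qed


definition W1 :: "nat \<Rightarrow> nat \<Rightarrow> letter list" where
  "W1 m n = replicate m Y @ X # replicate n Y"
definition W2 :: "nat \<Rightarrow> nat \<Rightarrow> nat \<Rightarrow> letter list" where
  "W2 a b c = replicate a Y @ X # replicate b Y @ X # replicate c Y"

lemma cnt0_notin: "count_list u X = 0 \<longleftrightarrow> X \<notin> set u"
  by (induction u) auto

lemma W2_split: assumes "count_list w X = 2" shows "\<exists>a b c. w = W2 a b c"
proof -
  have "X \<in> set w" using assms cnt0_notin[of w] by auto
  then obtain a w1 where w1: "w = replicate a Y @ X # w1" using split_firstX by blast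
  then have c1: "count_list w1 X = 1" using assms by (simp add: count_list_append cnt_repY)
  then have "X \<in> set w1" using cnt0_notin[of w1] by auto
  then obtain b w2 where w2: "w1 = replicate b Y @ X # w2" using split_firstX by blast
  then have "count_list w2 X = 0" using c1 by (simp add: count_list_append cnt_repY)
  then have "w2 = replicate (length w2) Y" by (rule noX_rep)
  then show ?thesis using w1 w2 unfolding W2_def by metis
qed

lemma W1_split: assumes "count_list w X = 1" shows "\<exists>m n. w = W1 m n"
proof -
  have "X \<in> set w" using assms cnt0_notin[of w] by auto
  then obtain a w1 where w1: "w = replicate a Y @ X # w1" using split_firstX by blast
  then have "count_list w1 X = 0" using assms by (simp add: count_list_append cnt_repY)
  then have "w1 = replicate (length w1) Y" by (rule noX_rep)
  then show ?thesis using w1 unfolding W1_def by metis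
qed

lemma mon_repYX: "mon (replicate a Y @ X # r) t = t 0 ^ a * mon r (\<lambda>i. t (Suc i))"
  by (simp add: mon_append mon_repY cnt_repY)

lemma mon_W1: "mon (W1 m n) t = t 0 ^ m * t 1 ^ n"
  by (simp add: W1_def mon_repYX mon_repY)
lemma mon_W2: "mon (W2 a b c) t = t 0 ^ a * t 1 ^ b * t 2 ^ c"
  by (simp add: W2_def mon_repYX mon_repY numeral_2_eq_2)

lemma Rw_noX: assumes "count_list u X = 0" shows "Rw X M u = 0"
proof -
  have "\<forall>i<length u. u ! i \<noteq> X" using assms cnt0_notin[of u] nth_mem by metis
  then show ?thesis by (simp add: Rw_def fun_eq_iff)
qed

lemma Rw_XX: "Rw X M [X] = M" by (simp add: Rw_def)

lemma Rw_uXv: assumes "count_list u X = 0"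
  shows "Rw X M (u @ X # v) = nmul (mono v) (nmul M (mono u)) + Rw X (nmul (nmul M (mono u)) (mono [X])) v"
proof -
  have "Rw X M (u @ ([X] @ v)) = Rw X (nmul (mono ([X] @ v)) M) u + Rw X (nmul M (mono u)) ([X] @ v)"
    by (rule Rw_append)
  also have "Rw X (nmul M (mono u)) ([X] @ v) = Rw X (nmul (mono v) (nmul M (mono u))) [X]
      + Rw X (nmul (nmul M (mono u)) (mono [X])) v"
    by (rule Rw_append)
  finally show ?thesis using Rw_noX[OF assms] by (simp add: Rw_XX)
qed

lemma Rw_W2: "Rw X M (W2 a b c) = nmul (mono (replicate b Y @ X # replicate c Y)) (nmul M (mono (replicate a Y)))
  + nmul (mono (replicate c Y)) (nmul (nmul (nmul M (mono (replicate a Y))) (mono [X])) (mono (replicate b Y)))"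
  unfolding W2_def
  by (simp add: Rw_uXv cnt_repY Rw_noX)

lemma Rw_W2_one: "Rw X (mono []) (W2 a b c) = mono (W1 b (c + a)) + mono (W1 (c + a) b)"
  by (subst Rw_W2) (simp add: nmul_mono_mono W1_def replicate_add)

lemma Rw_W2_x: "Rw X (gen X) (W2 a b c) = mono (W2 b c a) + mono (W2 c a b)"
  by (subst Rw_W2) (simp add: nmul_mono_mono W2_def gen_def)


definition p3 :: "real \<Rightarrow> real \<Rightarrow> real \<Rightarrow> nat \<Rightarrow> real" where
  "p3 a b c = (\<lambda>i. if i = 0 then a else if i = 1 then b else c)"

lemma p3_simps[simp]: "p3 a b c 0 = a" "p3 a b c 1 = b" "p3 a b c 2 = c"
  "p3 a b c (Suc 0) = b" "p3 a b c (Suc (Suc 0)) = c"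
  by (simp_all add: p3_def)

lemma ev_opx_poly: assumes "h \<in> polys" "\<And>w. w \<in> supp h \<Longrightarrow> f w \<in> polys"
  shows "ev (opx f h) t = (\<Sum>w\<in>supp h. h w * ev (f w) t)"
proof -
  have fin: "finite (supp h)" using assms by (simp add: polys_iff)
  have "opx f h = (\<lambda>v. \<Sum>w\<in>supp h. smul (h w) (f w) v)" by (simp add: opx_def smul_def)
  then have "ev (opx f h) t = (\<Sum>w\<in>supp h. ev (smul (h w) (f w)) t)"
    using ev_sum[OF fin, of "\<lambda>w. smul (h w) (f w)"] assms polys_smul by simp
  also have "\<dots> = (\<Sum>w\<in>supp h. h w * ev (f w) t)"
    using assms by (intro sum.cong refl) (simp add: ev_smul)
  finally show ?thesis .
qed

lemma polys_opx: assumes "h \<in> polys" "\<And>w. w \<in> supp h \<Longrightarrow> f w \<in> polys"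
  shows "opx f h \<in> polys"
proof -
  have "supp (opx f h) \<subseteq> (\<Union>w\<in>supp h. supp (f w))"
  proof
    fix v assume "v \<in> supp (opx f h)"
    then have "(\<Sum>w\<in>supp h. h w * f w v) \<noteq> 0" by (simp add: supp_def opx_def)
    then obtain w where "w \<in> supp h" "h w * f w v \<noteq> 0" by (meson sum.neutral)
    then show "v \<in> (\<Union>w\<in>supp h. supp (f w))" by (auto simp: supp_def)
  qed
  moreover have "finite (\<Union>w\<in>supp h. supp (f w))"
    using assms by (simp add: polys_iff)
  ultimately show ?thesis by (simp add: polys_iff finite_subset)
qed

lemma supp_W2: assumes "Xhom 2 h" "w \<in> supp h" shows "\<exists>a b c. w = W2 a b c"
  using assms by (intro W2_split) (simp add: Xhom_def supp_def)

lemma ev_dcycX: assumes "h \<in> polys" "Xhom 2 h"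
  shows "ev (dcyc X h) t = ev h (p3 (t 1) (t 0) (t 1)) + ev h (p3 (t 0) (t 1) (t 0))"
proof -
  have pol: "Rw X (mono []) w \<in> polys" if "w \<in> supp h" for w
    using supp_W2[OF assms(2) that] by (auto simp: Rw_W2_one polys_add polys_mono)
  have "ev (dcyc X h) t = (\<Sum>w\<in>supp h. h w * ev (Rw X (mono []) w) t)"
    unfolding dcyc_Rop[OF assms(1)] Rop_def by (rule ev_opx_poly[OF assms(1) pol])
  also have "\<dots> = (\<Sum>w\<in>supp h. h w * mon w (p3 (t 1) (t 0) (t 1)) + h w * mon w (p3 (t 0) (t 1) (t 0)))"
  proof (intro sum.cong refl)
    fix w assume "w \<in> supp h"
    then obtain a b c where w: "w = W2 a b c" using supp_W2[OF assms(2)] by blast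
    show "h w * ev (Rw X (mono []) w) t = h w * mon w (p3 (t 1) (t 0) (t 1)) + h w * mon w (p3 (t 0) (t 1) (t 0))"
      unfolding w Rw_W2_one using polys_mono
      by (simp add: ev_add ev_mono mon_W1 mon_W2 power_add algebra_simps)
  qed
  also have "\<dots> = ev h (p3 (t 1) (t 0) (t 1)) + ev h (p3 (t 0) (t 1) (t 0))"
    by (simp add: ev_def sum.distrib)
  finally show ?thesis .
qed

lemma ev_dcycX_xB: assumes "B \<in> polys" "Xhom 2 B"
  shows "ev (dcyc X (nmul (gen X) B)) t = ev B t + ev B (p3 (t 2) (t 0) (t 1)) + ev B (p3 (t 1) (t 2) (t 0))"
proof -
  have pol: "Rw X (gen X) w \<in> polys" if "w \<in> supp B" for w
    using supp_W2[OF assms(2) that] by (auto simp: Rw_W2_x polys_add polys_mono)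
  have "dcyc X (nmul (gen X) B) = Rop X B (gen X) + Rop X (gen X) B"
    by (rule dcyc_nmul[OF polys_gen assms(1)])
  also have "\<dots> = B + opx (Rw X (gen X)) B" by (simp only: Rop_gen if_True) (simp add: Rop_def)
  finally have e: "dcyc X (nmul (gen X) B) = B + opx (Rw X (gen X)) B" .
  have p2: "opx (Rw X (gen X)) B \<in> polys" by (rule polys_opx[OF assms(1) pol])
  have "ev (opx (Rw X (gen X)) B) t = (\<Sum>w\<in>supp B. B w * ev (Rw X (gen X) w) t)"
    by (rule ev_opx_poly[OF assms(1) pol])
  also have "\<dots> = (\<Sum>w\<in>supp B. B w * mon w (p3 (t 2) (t 0) (t 1)) + B w * mon w (p3 (t 1) (t 2) (t 0)))"
  proof (intro sum.cong refl)
    fix w assume "w \<in> supp B"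
    then obtain a b c where w: "w = W2 a b c" using supp_W2[OF assms(2)] by blast
    show "B w * ev (Rw X (gen X) w) t = B w * mon w (p3 (t 2) (t 0) (t 1)) + B w * mon w (p3 (t 1) (t 2) (t 0))"
      unfolding w Rw_W2_x using polys_mono
      by (simp add: ev_add ev_mono mon_W2 algebra_simps)
  qed
  also have "\<dots> = ev B (p3 (t 2) (t 0) (t 1)) + ev B (p3 (t 1) (t 2) (t 0))"
    by (simp add: ev_def sum.distrib)
  finally show ?thesis unfolding e using assms(1) p2 by (simp add: ev_add)
qed

lemma dL_eq: "dL c l = (\<lambda>p. l (p @ [c]))"
  by (simp add: dL_def dA_def)

lemma mon_snocX: "mon (p @ [X]) t = mon p t"
  by (simp add: mon_append)
lemma mon_snocY: "mon (p @ [Y]) t = mon p t * t (count_list p X)"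
  by (simp add: mon_append shift_def)

lemma snoc_polys: assumes "H \<in> polys" shows "(\<lambda>p. H (p @ [c])) \<in> polys"
proof -
  have "supp (\<lambda>p. H (p @ [c])) \<subseteq> (\<lambda>p. p @ [c]) -` supp H" by (auto simp: supp_def)
  moreover have "finite ((\<lambda>p. p @ [c]) -` supp H)"
    using assms by (intro finite_vimageI) (auto simp: polys_iff inj_def)
  ultimately show ?thesis by (simp add: polys_iff finite_subset)
qed

lemma ev_snoc: assumes "H \<in> polys"
  shows "ev (\<lambda>p. H (p @ [c])) t = (\<Sum>v\<in>supp H. if v \<noteq> [] \<and> last v = c then H v * mon (butlast v) t else 0)"
proof -
  have fin: "finite (supp H)" using assms by (simp add: polys_iff)
  have inj: "inj_on (\<lambda>p. p @ [c]) (supp (\<lambda>p. H (p @ [c])))" by (auto simp: inj_on_def)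
  have img: "(\<lambda>p. p @ [c]) ` supp (\<lambda>p. H (p @ [c])) = {v\<in>supp H. v \<noteq> [] \<and> last v = c}"
  proof (intro equalityI subsetI)
    fix v assume "v \<in> {v\<in>supp H. v \<noteq> [] \<and> last v = c}"
    then have "v = butlast v @ [c]" "butlast v \<in> supp (\<lambda>p. H (p @ [c]))"
      by (auto simp: supp_def)
    then show "v \<in> (\<lambda>p. p @ [c]) ` supp (\<lambda>p. H (p @ [c]))" by blast
  qed (auto simp: supp_def)
  have "(\<Sum>v\<in>supp H. if v \<noteq> [] \<and> last v = c then H v * mon (butlast v) t else 0)
      = (\<Sum>v\<in>{v\<in>supp H. v \<noteq> [] \<and> last v = c}. H v * mon (butlast v) t)"
    using fin by (simp add: sum.inter_filter)
  also have "\<dots> = (\<Sum>p\<in>supp (\<lambda>p. H (p @ [c])). H (p @ [c]) * mon p t)"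
    unfolding img[symmetric] by (simp add: sum.reindex[OF inj])
  finally show ?thesis by (simp add: ev_def)
qed

lemma ev_dLX: assumes "G \<in> polys" "Xhom 3 G"
  shows "ev (dL X G) t = ev G (t(3 := 0))"
proof -
  have "ev (dL X G) t = (\<Sum>v\<in>supp G. if v \<noteq> [] \<and> last v = X then G v * mon (butlast v) t else 0)"
    unfolding dL_eq by (rule ev_snoc[OF assms(1)])
  also have "\<dots> = (\<Sum>v\<in>supp G. G v * mon v (t(3 := 0)))"
  proof (intro sum.cong refl)
    fix v assume v: "v \<in> supp G"
    then have c3: "count_list v X = 3" using assms(2) by (simp add: Xhom_def supp_def)
    then have "v \<noteq> []" by auto
    then obtain p l where vp: "v = p @ [l]" by (metis append_butlast_last_id)
    show "(if v \<noteq> [] \<and> last v = X then G v * mon (butlast v) t else 0) = G v * mon v (t(3 := 0))"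
    proof (cases l)
      case X
      then have "count_list p X = 2" using c3 vp by (simp add: count_list_append)
      then have "mon p (t(3 := 0)) = mon p t" by (intro mon_cong) auto
      then show ?thesis using vp X by (simp add: mon_snocX)
    next
      case Y
      then have "count_list p X = 3" using c3 vp by (simp add: count_list_append)
      then show ?thesis using vp Y by (simp add: mon_snocY)
    qed
  qed
  also have "\<dots> = ev G (t(3 := 0))" by (simp add: ev_def)
  finally show ?thesis .
qed

lemma ev_dLY: assumes "F \<in> polys" "Xhom 2 F"
  shows "ev (dL Y F) t * t 2 = ev F t - ev F (t(2 := 0))"
proof -
  have "ev (dL Y F) t * t 2 = (\<Sum>v\<in>supp F. if v \<noteq> [] \<and> last v = Y then F v * mon (butlast v) t * t 2 else 0)"
    unfolding dL_eq ev_snoc[OF assms(1)] sum_distrib_right by (intro sum.cong refl) auto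
  also have "\<dots> = (\<Sum>v\<in>supp F. F v * mon v t - F v * mon v (t(2 := 0)))"
  proof (intro sum.cong refl)
    fix v assume v: "v \<in> supp F"
    then have c2: "count_list v X = 2" using assms(2) by (simp add: Xhom_def supp_def)
    then have "v \<noteq> []" by auto
    then obtain p l where vp: "v = p @ [l]" by (metis append_butlast_last_id)
    show "(if v \<noteq> [] \<and> last v = Y then F v * mon (butlast v) t * t 2 else 0) = F v * mon v t - F v * mon v (t(2 := 0))"
    proof (cases l)
      case X
      then have "count_list p X = 1" using c2 vp by (simp add: count_list_append)
      then have "mon p (t(2 := 0)) = mon p t" by (intro mon_cong) auto
      then show ?thesis using vp X by (simp add: mon_snocX)
    next
      case Y
      then have "count_list p X = 2" using c2 vp by (simp add: count_list_append)
      then show ?thesis using vp Y by (simp add: mon_snocY)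
    qed
  qed
  also have "\<dots> = ev F t - ev F (t(2 := 0))" by (simp add: ev_def sum_subtractf)
  finally show ?thesis .
qed

lemma Xhom_dL: "Xhom (Suc k) G \<Longrightarrow> Xhom k (dL X G)" "Xhom k F \<Longrightarrow> Xhom k (dL Y F)"
  by (auto simp: Xhom_def dL_eq count_list_append)

lemma dL_polys: "H \<in> polys \<Longrightarrow> dL c H \<in> polys"
  unfolding dL_eq by (rule snoc_polys)

lemma ev_cong: "Xhom k a \<Longrightarrow> (\<And>i. i \<le> k \<Longrightarrow> t i = t' i) \<Longrightarrow> ev a t = ev a t'"
  unfolding ev_def by (intro sum.cong refl) (auto simp: Xhom_def supp_def intro!: mon_cong)


lemma trzero_zero: "trzero 0" by (simp add: trzero_def lspan.lspan_zero)
lemma trzero_add: "trzero a \<Longrightarrow> trzero b \<Longrightarrow> trzero (a + b)" by (simp add: trzero_def lspan.lspan_add)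
lemma trzero_smul: "trzero a \<Longrightarrow> trzero (smul c a)" by (simp add: trzero_def lspan.lspan_smul)
lemma trzero_uminus: "trzero a \<Longrightarrow> trzero (- a)" using trzero_smul[of a "-1"] by (simp add: smul_m1)
lemma trzero_diff: "trzero a \<Longrightarrow> trzero b \<Longrightarrow> trzero (a - b)"
  using trzero_add[OF _ trzero_uminus] by fastforce
lemma trzero_comm: "p \<in> polys \<Longrightarrow> q \<in> polys \<Longrightarrow> trzero (nmul p q - nmul q p)"
  unfolding trzero_def by (rule lspan.lspan_base) blast
lemma trzero_rot: "trzero (mono (u @ v) - mono (v @ u))"
  using trzero_comm[OF polys_mono polys_mono, of u v] by (simp add: nmul_mono_mono)

lemma trzero_sum: "finite I \<Longrightarrow> (\<And>i. i \<in> I \<Longrightarrow> trzero (f i)) \<Longrightarrow> trzero (\<lambda>v. \<Sum>i\<in>I. f i v)"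
proof (induction I rule: finite_induct)
  case empty then show ?case using trzero_zero by simp
next
  case (insert x F)
  have e: "(\<lambda>v. \<Sum>i\<in>insert x F. f i v) = f x + (\<lambda>v. \<Sum>i\<in>F. f i v)"
    using insert by (simp add: fun_eq_iff)
  show ?case unfolding e using insert by (simp add: trzero_add)
qed

lemma trzero_opx: assumes "h \<in> polys" "\<And>w. w \<in> supp h \<Longrightarrow> trzero (f w)" shows "trzero (opx f h)"
proof -
  have "opx f h = (\<lambda>v. \<Sum>w\<in>supp h. smul (h w) (f w) v)" by (simp add: opx_def smul_def)
  then show ?thesis using assms by (simp add: trzero_sum polys_iff trzero_smul)
qed

lemma trzero_W2: "trzero (mono (W2 a b c) - smul (1/2) (nmul (gen X) (Rw X (mono []) (W2 a b c))))"
proof -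
  let ?w = "mono (W2 a b c)" and ?m1 = "mono (W2 0 b (c + a))" and ?m2 = "mono (W2 0 (c + a) b)"
  have e: "nmul (gen X) (Rw X (mono []) (W2 a b c)) = ?m1 + ?m2"
    by (subst Rw_W2_one) (simp add: nmul_add_right gen_def nmul_mono_mono W1_def W2_def)
  have r1: "trzero (?w - ?m1)"
    using trzero_rot[of "replicate a Y" "X # replicate b Y @ X # replicate c Y"]
    by (simp add: W2_def replicate_add)
  have r2: "trzero (?m1 - ?m2)"
    using trzero_rot[of "X # replicate b Y" "X # replicate (c + a) Y"] by (simp add: W2_def)
  have eq: "?w - smul (1/2) (?m1 + ?m2) = smul (1/2) (?w - ?m1) + smul (1/2) ((?w - ?m1) + (?m1 - ?m2))"
    by (simp add: fun_eq_iff smul_def algebra_simps)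
  show ?thesis unfolding e eq by (intro trzero_add trzero_smul r1 r2)
qed

lemma opx_mono_id: "h \<in> polys \<Longrightarrow> opx mono h = h"
  by (subst (2) poly_repr) (simp_all add: opx_def)

lemma opx_diff_f: "opx (\<lambda>w. A w - smul c (B w)) h = opx A h - smul c (opx B h)"
  unfolding opx_def smul_def fun_eq_iff
  by (simp add: right_diff_distrib sum_subtractf sum_distrib_left mult.left_commute)

lemma trace_char: assumes "h \<in> polys" "Xhom 2 h" "dcyc X h = 0" shows "trzero h"
proof -
  let ?f = "\<lambda>w. mono w - smul (1/2) (nmul (gen X) (Rw X (mono []) w))"
  have t: "trzero (opx ?f h)"
    using assms(1) by (rule trzero_opx) (metis supp_W2[OF assms(2)] trzero_W2)
  have "opx (\<lambda>w. nmul (gen X) (Rw X (mono []) w)) h = nmul (gen X) (opx (Rw X (mono [])) h)"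
    unfolding opx_def by (simp only: nmul_sum_right nmul_cmult_right)
  also have "\<dots> = 0" using assms by (simp add: dcyc_Rop Rop_def)
  finally have z: "opx (\<lambda>w. nmul (gen X) (Rw X (mono []) w)) h = 0" .
  have "opx ?f h = opx mono h - smul (1/2) (opx (\<lambda>w. nmul (gen X) (Rw X (mono []) w)) h)"
    by (rule opx_diff_f)
  also have "\<dots> = h" using z opx_mono_id[OF assms(1)] by (simp add: smul_zero)
  finally show ?thesis using t by simp
qed


lemma Xhom_add: "Xhom k a \<Longrightarrow> Xhom k b \<Longrightarrow> Xhom k (a + b)"
  by (auto simp: Xhom_def) (metis add.right_neutral)+
lemma Xhom_smul: "Xhom k a \<Longrightarrow> Xhom k (smul c a)" by (auto simp: Xhom_def smul_def)
lemma Xhom_uminus: "Xhom k a \<Longrightarrow> Xhom k (- a)" by (auto simp: Xhom_def)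
lemma Xhom_zero: "Xhom k 0" by (simp add: Xhom_def)
lemma Xhom_genX: "Xhom 1 (gen X)" by (simp add: Xhom_def gen_def mono_def)
lemma Xhom_genY: "Xhom 0 (gen Y)" by (simp add: Xhom_def gen_def mono_def)

lemma Xhom_nmul: assumes "Xhom k a" "Xhom m b" shows "Xhom (k + m) (nmul a b)"
  unfolding Xhom_def
proof (intro allI impI)
  fix w assume "nmul a b w \<noteq> 0"
  then obtain l where "a (take l w) * b (drop l w) \<noteq> 0"
    unfolding nmul_def by (meson sum.neutral)
  then have "count_list (take l w) X = k" "count_list (drop l w) X = m"
    using assms by (auto simp: Xhom_def)
  moreover have "count_list w X = count_list (take l w) X + count_list (drop l w) X"
    by (metis append_take_drop_id count_list_append)
  ultimately show "count_list w X = k + m" by simp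
qed

lemma Xhom_dcycX: assumes "Xhom (Suc k) h" shows "Xhom k (dcyc X h)"
  unfolding Xhom_def
proof (intro allI impI)
  fix v assume "dcyc X h v \<noteq> 0"
  then obtain l where "h (drop l v @ X # take l v) \<noteq> 0" unfolding dcyc_def by (meson sum.neutral)
  then have "count_list (drop l v @ X # take l v) X = Suc k" using assms unfolding Xhom_def by blast
  moreover have "count_list v X = count_list (take l v) X + count_list (drop l v) X"
    by (metis append_take_drop_id count_list_append)
  then have "count_list (drop l v @ X # take l v) X = Suc (count_list v X)"
    by (simp add: count_list_append)
  ultimately show "count_list v X = k" by simp
qed

lemma homog_Xhom: "homog (int k) q a \<Longrightarrow> Xhom k a" by (auto simp: homog_def Xhom_def)

lemma length_count: "length w = count_list w X + count_list w Y"
proof (induction w)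
  case (Cons a w) then show ?case by (cases a) auto
qed simp

lemma homog_len: "homog p q a \<Longrightarrow> w \<in> supp a \<Longrightarrow> int (length w) = p + q"
  by (auto simp: homog_def supp_def length_count)

lemma Rw_polys: assumes "M \<in> polys" shows "Rw c M w \<in> polys"
proof -
  have "Rw c M w = (\<lambda>v. \<Sum>i<length w. (if w ! i = c then nmul (nmul (mono (drop (Suc i) w)) M) (mono (take i w)) else 0) v)"
    by (auto simp: Rw_def fun_eq_iff intro!: sum.cong)
  moreover have "(if w ! i = c then nmul (nmul (mono (drop (Suc i) w)) M) (mono (take i w)) else 0) \<in> polys" for i
    using assms by (simp add: polys_zero polys_nmul polys_mono)
  ultimately show ?thesis using ev_sum[of "{..<length w}"] by simp
qed

lemma polys_dcyc: "h \<in> polys \<Longrightarrow> dcyc c h \<in> polys"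
  by (simp add: dcyc_Rop Rop_def polys_opx Rw_polys polys_mono)

lemma rel_ev:
  assumes "F \<in> polys" "G \<in> polys" "Xhom 2 F" "Xhom 3 G" "bracket G (gen Y) + bracket (gen X) F = 0"
  shows "(t 3 - t 0) * ev G t = ev F t - ev F (shift 1 t)"
proof -
  have p: "nmul G (gen Y) \<in> polys" "nmul (gen Y) G \<in> polys" "nmul (gen X) F \<in> polys" "nmul F (gen X) \<in> polys"
    using assms by (simp_all add: polys_nmul polys_gen)
  have "0 = ev (bracket G (gen Y) + bracket (gen X) F) t" using assms(5) by (simp add: ev_zero)
  also have "\<dots> = (ev (nmul G (gen Y)) t - ev (nmul (gen Y) G) t) + (ev (nmul (gen X) F) t - ev (nmul F (gen X)) t)"
    unfolding bracket_def using p by (simp add: ev_add ev_diff polys_diff)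
  also have "\<dots> = (ev G t * t 3 - t 0 * ev G t) + (ev F (shift 1 t) - ev F t)"
    using assms p
    by (simp add: ev_nmul[OF _ polys_gen assms(4)] ev_nmul[OF polys_gen _ Xhom_genY]
        ev_nmul[OF polys_gen _ Xhom_genX] ev_nmul[OF _ polys_gen assms(3)] ev_genX ev_genY shift_def)
  finally show ?thesis by (simp add: algebra_simps)
qed

lemma ev_rev:
  assumes "rvsign F" "Xhom 2 F" "\<forall>w\<in>supp F. length w = n"
  shows "ev F (p3 c b a) = - ((-1) ^ n) * ev F (p3 a b c)"
proof -
  have mr: "mon w (p3 c b a) = mon (rev w) (p3 a b c)" if ws: "w \<in> supp F" for w
  proof -
    obtain x y z where w: "w = W2 x y z" using supp_W2[OF assms(2) ws] by blast
    have "rev w = W2 z y x" by (simp add: w W2_def)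
    then show ?thesis by (simp add: w mon_W2)
  qed
  have rs: "rev ` supp F = supp F"
  proof -
    have "F (rev v) \<noteq> 0 \<longleftrightarrow> F v \<noteq> 0" for v using assms(1) by (simp add: rvsign_def)
    then show ?thesis by (auto simp: supp_def image_iff) (metis rev_rev_ident)
  qed
  have "ev F (p3 c b a) = (\<Sum>w\<in>supp F. F w * mon (rev w) (p3 a b c))"
    by (simp add: ev_def mr)
  also have "\<dots> = (\<Sum>v\<in>rev ` supp F. F (rev v) * mon v (p3 a b c))"
    by (simp add: sum.reindex inj_on_def)
  also have "\<dots> = (\<Sum>v\<in>supp F. - ((-1) ^ n) * (F v * mon v (p3 a b c)))"
    unfolding rs using assms(1,3) by (intro sum.cong refl) (simp add: rvsign_def)
  also have "\<dots> = - ((-1) ^ n) * ev F (p3 a b c)"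
    by (simp add: ev_def sum_distrib_left)
  finally show ?thesis .
qed

lemma ev_TI: assumes "F \<in> freeLie" "Xhom 2 F" shows "ev F (\<lambda>i. t i + c) = ev F t"
  using Lie_TIp[OF assms(1)] xcomp_id[OF assms(2)] unfolding TIp_def by (metis zero_less_numeral)

lemma yQy_zero: assumes "Q \<in> polys" "Xhom 1 Q" "\<And>t. t 0 * ev Q t * t 1 = 0" shows "Q = 0"
proof -
  let ?E = "nmul (gen Y) (nmul Q (gen Y))"
  have pE: "nmul Q (gen Y) \<in> polys" "?E \<in> polys" using assms by (simp_all add: polys_nmul polys_gen)
  have "ev ?E t = t 0 * (ev Q t * t 1)" for t
    using assms pE
    by (simp add: ev_nmul[OF polys_gen _ Xhom_genY] ev_nmul[OF _ polys_gen assms(2)] ev_genY shift_def)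
  then have "?E = 0"
    using inj_ev[OF pE(2), of 1] Xhom_nmul[OF Xhom_genY Xhom_nmul[OF assms(2) Xhom_genY]] assms(3)
    by (simp add: mult.assoc)
  show ?thesis
  proof
    fix v
    have "?E (Y # (v @ [Y])) = Q v" by (simp add: nmul_gen_left nmul_gen_right butlast_append)
    then show "Q v = 0 v" using \<open>?E = 0\<close> by simp
  qed
qed


lemma le2_cases: "(i::nat) \<le> 2 \<Longrightarrow> i = 0 \<or> i = 1 \<or> i = 2" by auto

lemma core_cyc:
  assumes PF: "F \<in> polys" and XF: "Xhom 2 F" and PG: "G \<in> polys" and XG: "Xhom 3 G"
    and rel: "bracket G (gen Y) + bracket (gen X) F = 0"
  shows "ev F (p3 a b c) = ev F (p3 b c a)"
proof -
  let ?t = "(p3 a b c)(3 := a)"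
  have "(?t 3 - ?t 0) * ev G ?t = ev F ?t - ev F (shift 1 ?t)" by (rule rel_ev[OF PF PG XF XG rel])
  then have e: "ev F ?t = ev F (shift 1 ?t)" by simp
  have "ev F ?t = ev F (p3 a b c)" by (rule ev_cong[OF XF]) (auto dest!: le2_cases)
  moreover have "ev F (shift 1 ?t) = ev F (p3 b c a)"
    by (rule ev_cong[OF XF]) (auto dest!: le2_cases simp: shift_def)
  ultimately show ?thesis using e by simp
qed

lemma core_K:
  assumes PF: "F \<in> polys" and XF: "Xhom 2 F" and PG: "G \<in> polys" and XG: "Xhom 3 G"
    and rel: "bracket G (gen Y) + bracket (gen X) F = 0"
  shows "s * ev (dL X G + dL Y F) (p3 s r s) = ev F (p3 r s 0) - ev F (p3 s r 0)"
proof -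
  let ?t1 = "(p3 s r s)(3 := 0)"
  have "(?t1 3 - ?t1 0) * ev G ?t1 = ev F ?t1 - ev F (shift 1 ?t1)" by (rule rel_ev[OF PF PG XF XG rel])
  moreover have "ev F ?t1 = ev F (p3 s r s)" by (rule ev_cong[OF XF]) (auto dest!: le2_cases)
  moreover have "ev F (shift 1 ?t1) = ev F (p3 r s 0)"
    by (rule ev_cong[OF XF]) (auto dest!: le2_cases simp: shift_def)
  ultimately have g: "s * ev G ?t1 = ev F (p3 r s 0) - ev F (p3 s r s)" by (simp add: algebra_simps)
  have dy: "ev (dL Y F) (p3 s r s) * s = ev F (p3 s r s) - ev F ((p3 s r s)(2 := 0))"
    using ev_dLY[OF PF XF, of "p3 s r s"] by simp
  have "ev F ((p3 s r s)(2 := 0)) = ev F (p3 s r 0)" by (rule ev_cong[OF XF]) (auto dest!: le2_cases)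
  then have dy': "s * ev (dL Y F) (p3 s r s) = ev F (p3 s r s) - ev F (p3 s r 0)" using dy by (simp add: mult.commute)
  have "ev (dL X G + dL Y F) (p3 s r s) = ev G ?t1 + ev (dL Y F) (p3 s r s)"
    by (simp add: ev_add dL_polys PF PG ev_dLX[OF PG XG])
  then show ?thesis using g dy' by (simp add: distrib_left)
qed

lemma core:
  assumes FL: "F \<in> freeLie" and XF: "Xhom 2 F" and lenF: "\<forall>w\<in>supp F. length w = n"
    and PG: "G \<in> polys" and XG: "Xhom 3 G" and rel: "bracket G (gen Y) + bracket (gen X) F = 0"
  shows "(odd n \<longrightarrow> trzero (dL X G + dL Y F)) \<and> (even n \<longrightarrow> trzero (dL X G + dL Y F) \<longrightarrow> F = 0 \<and> G = 0)"
proof -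
  have PF: "F \<in> polys" using FL freeLie_polys by blast
  define f where "f = (\<lambda>a b c. ev F (p3 a b c))"
  define e :: real where "e = - ((-1) ^ n)"
  have cyc: "f a b c = f b c a" for a b c unfolding f_def by (rule core_cyc[OF PF XF PG XG rel])
  have rv: "f c b a = e * f a b c" for a b c
    unfolding f_def e_def by (rule ev_rev[OF Lie_rvsign[OF FL] XF lenF])
  have hash: "f r s 0 = e * f s r 0" for r s using cyc[of 0 r s] rv[of 0 r s] by simp
  define h where "h = dL X G + dL Y F"
  have Ph: "h \<in> polys" by (simp add: h_def polys_add dL_polys PF PG)
  have Xh: "Xhom 2 h" unfolding h_def
    by (intro Xhom_add Xhom_dL) (use XG XF in \<open>simp_all add: numeral_3_eq_3 numeral_2_eq_2\<close>)
  have K: "s * ev h (p3 s r s) = f r s 0 - f s r 0" for s r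
    unfolding h_def f_def by (rule core_K[OF PF XF PG XG rel])
  define Q where "Q = dcyc X h"
  have PQ: "Q \<in> polys" by (simp add: Q_def polys_dcyc Ph)
  have XQ: "Xhom 1 Q" unfolding Q_def by (rule Xhom_dcycX) (use Xh in \<open>simp add: numeral_2_eq_2\<close>)
  have evQ: "ev Q t = ev h (p3 (t 1) (t 0) (t 1)) + ev h (p3 (t 0) (t 1) (t 0))" for t
    unfolding Q_def by (rule ev_dcycX[OF Ph Xh])
  show ?thesis
  proof (rule conjI; intro impI)
    assume "odd n"
    then have e1: "e = 1" by (simp add: e_def)
    have K0: "s * ev h (p3 s r s) = 0" for s r using K[of s r] hash[of r s] e1 by simp
    have "t 0 * ev Q t * t 1 = 0" for t
    proof -
      have "t 0 * ev Q t * t 1 = t 0 * (t 1 * ev h (p3 (t 1) (t 0) (t 1))) + t 1 * (t 0 * ev h (p3 (t 0) (t 1) (t 0)))"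
        by (simp add: evQ algebra_simps)
      then show ?thesis by (simp add: K0)
    qed
    then have "Q = 0" by (rule yQy_zero[OF PQ XQ])
    then show "trzero (dL X G + dL Y F)" using trace_char[OF Ph Xh] by (simp add: Q_def h_def)
  next
    assume ev: "even n" and tz: "trzero (dL X G + dL Y F)"
    then have em: "e = -1" by (simp add: e_def)
    have "Q = 0" using trzero_dcyc tz by (simp add: Q_def h_def)
    then have Hs: "ev h (p3 r s r) + ev h (p3 s r s) = 0" for r s
      using evQ[of "p3 s r 0"] by (simp add: ev_zero)
    have sym: "f r s 0 = f s r 0" for r s
    proof -
      have "r * (s * ev h (p3 s r s)) + s * (r * ev h (p3 r s r)) = r * (f r s 0 - f s r 0) + s * (f s r 0 - f r s 0)"
        by (simp only: K)
      then have "(r - s) * (f r s 0 - f s r 0) = r * (s * ev h (p3 s r s)) + s * (r * ev h (p3 r s r))"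
        by (simp add: algebra_simps)
      also have "\<dots> = s * r * (ev h (p3 r s r) + ev h (p3 s r s))" by (simp add: algebra_simps)
      also have "\<dots> = 0" using Hs by simp
      finally show ?thesis by auto
    qed
    have f0: "f r s 0 = 0" for r s using hash[of r s] sym[of r s] em by simp
    have "ev F t = 0" for t
    proof -
      have "ev F t = ev F (\<lambda>i. t i + (- t 2))" using ev_TI[OF FL XF, of t "- t 2"] by simp
      also have "\<dots> = ev F (p3 (t 0 - t 2) (t 1 - t 2) 0)" by (rule ev_cong[OF XF]) (auto dest!: le2_cases)
      also have "\<dots> = 0" using f0 by (simp add: f_def)
      finally show ?thesis .
    qed
    then have F0: "F = 0" by (rule inj_ev[OF PF XF])
    have "bracket G (gen Y) = 0" using rel by (simp add: F0 bracket_def)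
    then have c1: "nmul G (gen Y) = nmul (gen Y) G" by (simp add: bracket_def)
    have c2: "X \<in> set w" if "G w \<noteq> 0" for w
      using XG that cnt0_notin[of w] by (auto simp: Xhom_def)
    have "G = 0" by (rule commY_zero[OF c1 c2])
    then show "F = 0 \<and> G = 0" using F0 by simp
  qed
qed


lemma Xhom_diff: "Xhom k a \<Longrightarrow> Xhom k b \<Longrightarrow> Xhom k (a - b)"
  by (auto simp: Xhom_def) (metis diff_zero)+

lemma zero_DerL: "(\<lambda>l. 0) \<in> DerL"
  unfolding DerL_def by (simp add: freeLie.fl_zero smul_zero bracket_def)

lemma zero_krv: "(\<lambda>l. 0) \<in> krv i j"
  unfolding krv_def using zero_DerL
  by (simp add: divg_def dL_eq trzero_zero homog_zero)

lemma homog_genX: "homog 1 0 (gen X)" by (simp add: homog_def gen_def mono_def)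
lemma homog_genY: "homog 0 1 (gen Y)" by (simp add: homog_def gen_def mono_def)

lemma krv_data:
  assumes u: "u \<in> krv 3 j"
  shows "u \<in> DerL" "u (gen X) \<in> freeLie" "u (gen Y) \<in> freeLie"
    "homog 3 (int j - 1) (u (gen X))" "homog 2 (int j) (u (gen Y))"
    "bracket (u (gen X)) (gen Y) + bracket (gen X) (u (gen Y)) = 0"
    "trzero (dL X (u (gen X)) + dL Y (u (gen Y)))"
proof -
  show D: "u \<in> DerL" using u by (simp add: krv_def)
  show "u (gen X) \<in> freeLie" "u (gen Y) \<in> freeLie" using D freeLie.fl_gen by (auto simp: DerL_def)
  have hom: "\<forall>l\<in>freeLie. \<forall>p q. homog p q l \<longrightarrow> homog (p + 3 - 1) (q + int j - 1) (u l)"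
    using u by (simp add: krv_def)
  show "homog 3 (int j - 1) (u (gen X))" using hom freeLie.fl_gen[of X] homog_genX by fastforce
  show "homog 2 (int j) (u (gen Y))" using hom freeLie.fl_gen[of Y] homog_genY by fastforce
  show "bracket (u (gen X)) (gen Y) + bracket (gen X) (u (gen Y)) = 0"
    using u DerL_bracket_xy[OF D] by (simp add: krv_def)
  show "trzero (dL X (u (gen X)) + dL Y (u (gen Y)))" using u by (simp add: krv_def divg_def)
qed

lemma len_of_homog2: "homog 2 (int j) F \<Longrightarrow> \<forall>w\<in>supp F. length w = j + 2"
  using homog_len by fastforce

lemma FLrep_data:
  assumes g: "g \<in> FLrep 3 j"
  shows "dcyc Y g \<in> freeLie" "- dcyc X g \<in> freeLie" "homog 3 (int j - 1) (dcyc Y g)" "homog 2 (int j) (- dcyc X g)"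
    "bracket (dcyc Y g) (gen Y) + bracket (gen X) (- dcyc X g) = 0"
proof -
  show "dcyc Y g \<in> freeLie" "- dcyc X g \<in> freeLie" using FLrep_dcyc_Lie[OF g] freeLie_uminus by auto
  have hg: "homog 3 (int j) g" using FLrep_homog[OF g] by simp
  show "homog 3 (int j - 1) (dcyc Y g)" using dcyc_homog(2)[OF hg] .
  show "homog 2 (int j) (- dcyc X g)" using homog_uminus[OF dcyc_homog(1)[OF hg]] by simp
  show "bracket (dcyc Y g) (gen Y) + bracket (gen X) (- dcyc X g) = 0"
    using uGamma_xy[OF g] DerL_bracket_xy[OF uGamma_DerL[OF g]] uGamma_gen by simp
qed

lemma uGamma_krv: assumes g: "g \<in> FLrep 3 j" and oj: "odd j" shows "uGamma g \<in> krv 3 j"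
proof -
  note d = FLrep_data[OF g]
  have PG: "dcyc Y g \<in> polys" using d(1) freeLie_polys by blast
  have XG: "Xhom 3 (dcyc Y g)" using homog_Xhom[of 3] d(3) by simp
  have XF: "Xhom 2 (- dcyc X g)" using homog_Xhom[of 2] d(4) by simp
  have "odd (j + 2)" using oj by simp
  then have tz: "trzero (dL X (dcyc Y g) + dL Y (- dcyc X g))"
    using core[OF d(2) XF len_of_homog2[OF d(4)] PG XG d(5)] by blast
  have hom: "homog (p + 3 - 1) (q + int j - 1) (uGamma g l)" if "l \<in> freeLie" "homog p q l" for l p q
  proof -
    have "homog (1 + 2) (int j - 1) (dcyc Y g)" using d(3) by simp
    moreover have "homog 2 (1 + (int j - 1)) (- dcyc X g)" using d(4) by simp
    ultimately have "homog (p + 2) (q + (int j - 1)) (derA (dcyc Y g) (- dcyc X g) l)"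
      by (rule derA_homog) (rule that(2))
    then show ?thesis using that(1) by (simp add: uGamma_def algebra_simps)
  qed
  show ?thesis unfolding krv_def divg_def
    using uGamma_DerL[OF g] uGamma_xy[OF g] tz hom by (simp add: uGamma_gen)
qed

lemma krv_even: assumes u: "u \<in> krv 3 j" and ej: "even j" shows "u = (\<lambda>l. 0)"
proof -
  note d = krv_data[OF u]
  have PG: "u (gen X) \<in> polys" using d(2) freeLie_polys by blast
  have XG: "Xhom 3 (u (gen X))" using homog_Xhom[of 3] d(4) by simp
  have XF: "Xhom 2 (u (gen Y))" using homog_Xhom[of 2] d(5) by simp
  have "even (j + 2)" using ej by simp
  then have "u (gen Y) = 0 \<and> u (gen X) = 0"
    using core[OF d(3) XF len_of_homog2[OF d(5)] PG XG d(6)] d(7) by blast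
  then show ?thesis using DerL_unique[OF d(1) zero_DerL] by simp
qed

lemma krv_odd: assumes u: "u \<in> krv 3 j" and oj: "odd j" shows "u \<in> uGamma ` FLrep 3 j"
proof -
  note d = krv_data[OF u]
  let ?G = "u (gen X)" and ?F = "u (gen Y)"
  have PG: "?G \<in> polys" using d(2) freeLie_polys by blast
  have PF: "?F \<in> polys" using d(3) freeLie_polys by blast
  have XG: "Xhom 3 ?G" using homog_Xhom[of 3] d(4) by simp
  have XF: "Xhom 2 ?F" using homog_Xhom[of 2] d(5) by simp
  define B where "B = smul (-1/3) ?F"
  define g0 where "g0 = nmul (gen X) B"
  have BL: "B \<in> freeLie" using d(3) by (simp add: B_def freeLie.fl_smul)
  have hB: "homog 2 (int j) B" by (simp add: B_def homog_smul d(5))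
  have g0: "g0 \<in> FLrep 3 j"
    unfolding FLrep_def g0_def
    by (rule lspan.lspan_base, rule CollectI, rule exI[of _ "gen X"], rule exI[of _ B],
        rule exI[of _ 1], rule exI[of _ 0], rule exI[of _ 2], rule exI[of _ "int j"])
       (simp add: freeLie.fl_gen BL homog_genX hB)
  have cyc: "ev ?F (p3 a b c) = ev ?F (p3 b c a)" for a b c by (rule core_cyc[OF PF XF PG XG d(6)])
  have e1: "dcyc X g0 = smul (-1/3) (dcyc X (nmul (gen X) ?F))"
    by (simp add: g0_def B_def nmul_smul_right dcyc_smul)
  have ev3: "ev (dcyc X (nmul (gen X) ?F)) t = 3 * ev ?F t" for t
  proof -
    have a: "ev ?F t = ev ?F (p3 (t 0) (t 1) (t 2))" by (rule ev_cong[OF XF]) (auto dest!: le2_cases)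
    have "ev (dcyc X (nmul (gen X) ?F)) t = ev ?F t + ev ?F (p3 (t 2) (t 0) (t 1)) + ev ?F (p3 (t 1) (t 2) (t 0))"
      by (rule ev_dcycX_xB[OF PF XF])
    also have "\<dots> = 3 * ev ?F t" using a cyc[of "t 2" "t 0" "t 1"] cyc[of "t 1" "t 2" "t 0"] by simp
    finally show ?thesis .
  qed
  have Pd: "dcyc X (nmul (gen X) ?F) \<in> polys" by (simp add: polys_dcyc polys_nmul polys_gen PF)
  have Xd: "Xhom 2 (dcyc X (nmul (gen X) ?F))"
  proof -
    have "Xhom (Suc 2) (nmul (gen X) ?F)" using Xhom_nmul[OF Xhom_genX XF] by (simp add: numeral_3_eq_3)
    then show ?thesis by (rule Xhom_dcycX)
  qed
  define A where "A = dcyc X (nmul (gen X) ?F)"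
  have PA: "A \<in> polys" using Pd by (simp add: A_def)
  have XA: "Xhom 2 A" using Xd by (simp add: A_def)
  have e1': "dcyc X g0 = smul (-1/3) A" using e1 by (simp add: A_def)
  have P1: "- smul (-1/3) A \<in> polys" by (rule polys_uminus[OF polys_smul[OF PA]])
  have "- smul (-1/3) A - ?F = 0"
  proof (rule inj_ev)
    show "- smul (-1/3) A - ?F \<in> polys" by (rule polys_diff[OF P1 PF])
    show "Xhom 2 (- smul (-1/3) A - ?F)" by (rule Xhom_diff[OF Xhom_uminus[OF Xhom_smul[OF XA]] XF])
    fix t
    have "ev (- smul (-1/3) A - ?F) t = ev (- smul (-1/3) A) t - ev ?F t" by (rule ev_diff[OF P1 PF])
    also have "\<dots> = - ((-1/3) * ev A t) - ev ?F t"
      by (simp only: ev_uminus[OF polys_smul[OF PA]] ev_smul[OF PA])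
    also have "\<dots> = 0" using ev3[of t] by (simp add: A_def)
    finally show "ev (- smul (-1/3) A - ?F) t = 0" .
  qed
  then have Fy: "uGamma g0 (gen Y) = ?F" by (simp add: uGamma_gen e1')
  note d0 = FLrep_data[OF g0]
  have rel0: "bracket (dcyc Y g0) (gen Y) + bracket (gen X) ?F = 0"
    using d0(5) Fy uGamma_gen by simp
  let ?D = "dcyc Y g0 - ?G"
  have b1: "bracket (dcyc Y g0) (gen Y) = - bracket (gen X) ?F" using rel0 by (simp add: eq_neg_iff_add_eq_0)
  have b2: "bracket ?G (gen Y) = - bracket (gen X) ?F" using d(6) by (simp add: eq_neg_iff_add_eq_0)
  have "bracket ?D (gen Y) = bracket (dcyc Y g0) (gen Y) - bracket ?G (gen Y)"
    by (simp add: bracket_def nmul_diff_left nmul_diff_right)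
  also have "\<dots> = 0" using b1 b2 by simp
  finally have "bracket ?D (gen Y) = 0" .
  then have c1: "nmul ?D (gen Y) = nmul (gen Y) ?D"
    by (simp add: bracket_def)
  have XD: "Xhom 3 ?D" by (rule Xhom_diff[OF homog_Xhom[of 3] XG]) (use d0(3) in simp)
  have c2: "X \<in> set w" if "?D w \<noteq> 0" for w
    using XD that cnt0_notin[of w] by (auto simp: Xhom_def)
  have "?D = 0" by (rule commY_zero[OF c1 c2])
  then have Gx: "uGamma g0 (gen X) = ?G" by (simp add: uGamma_gen)
  have "u = uGamma g0" using DerL_unique[OF d(1) uGamma_DerL[OF g0]] Fy Gx by simp
  then show ?thesis using g0 by blast
qed

theorem mainTheorem2:
  fixes j :: nat
  shows "(even j \<longrightarrow> krv 3 j = {\<lambda>l. 0})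
       \<and> (odd j \<longrightarrow> krv 3 j = uGamma ` FLrep 3 j)"
proof (intro conjI impI)
  assume "even j"
  then show "krv 3 j = {\<lambda>l. 0}" using krv_even zero_krv by blast
next
  assume "odd j"
  then show "krv 3 j = uGamma ` FLrep 3 j" using krv_odd uGamma_krv by blast
qed


end
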